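(* Let $\mathcal K$ be a compact subset of $\mathcal L_{\mathbb C}$. There are constants $r_0>0$ and $C<\infty$ such that for any $x\in\mathbf S^3$, $L\in\mathcal K$ and $0<\delta\le r\le r_0$, \[\eta_L(A(x,r,\delta))\le C\delta^{1/2},\qquad\text{where }A(x,r,\delta)=\{y\in\mathbf S^3:r\le d(x,y)\le r+\delta\}.\]
   Context: On $\mathbb{C}^3$: $u\cdot v=\sum u_i\bar v_i$, $\|u\|=\sqrt{u\cdot u}$, $\langle u,v\rangle=u_0\bar v_0-u_1\bar v_1-u_2\bar v_2$, $q(u)=\langle u,u\rangle$, $\|u\wedge v\|^2=\|u\|^2\|v\|^2-|u\cdot v|^2$. $\mathbf S^3=\{u\in\mathbb P^2_{\mathbb C}:q(u)=0\}$ with visual metric $d(u,v)=\sqrt{|\langle u,v\rangle|/(\|u\|\|v\|)}$. $\mathcal L_{\mathbb C}=\{w\in\mathbb P^2_{\mathbb C}:q(w)<0\}$ with metric $d_E(u,v)=\|u\wedge v\|/(\|u\|\|v\|)$; $w$ is identified with the chain $L_w=\{u\in\mathbf S^3:\langle u,w\rangle=0\}$. For a chain $L$, $\eta_L$ is the $2$-dimensional Hausdorff measure on $L$ with respect to $d$. *)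

theory Defs
  imports "HOL-Analysis.Analysis"
begin

type_synonym cvec = "complex^3"

definition herm_std :: "cvec \<Rightarrow> cvec \<Rightarrow> complex" where
  "herm_std u v = u$0 * cnj (v$0) + u$1 * cnj (v$1) + u$2 * cnj (v$2)"

definition herm :: "cvec \<Rightarrow> cvec \<Rightarrow> complex" where
  "herm u v = u$0 * cnj (v$0) - u$1 * cnj (v$1) - u$2 * cnj (v$2)"

definition qform :: "cvec \<Rightarrow> complex" where
  "qform u = herm u u"

text \<open>||u wedge v||^2 = ||u||^2 ||v||^2 - |u . v|^2\<close>
definition wedge_norm :: "cvec \<Rightarrow> cvec \<Rightarrow> real" where
  "wedge_norm u v = sqrt ((norm u)^2 * (norm v)^2 - (cmod (herm_std u v))^2)"

definition proj_pt :: "cvec set \<Rightarrow> bool" where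
  "proj_pt P \<longleftrightarrow> (\<exists>u. u \<noteq> 0 \<and> P = range (\<lambda>c::complex. c *s u))"

definition ProjPlane :: "cvec set set" where
  "ProjPlane = {P. proj_pt P}"

definition rep :: "cvec set \<Rightarrow> cvec" where
  "rep P = (SOME u. u \<in> P \<and> u \<noteq> 0)"

definition S3 :: "cvec set set" where
  "S3 = {P \<in> ProjPlane. qform (rep P) = 0}"

text \<open>Negative points L_C = {q < 0} (q(u) is real).\<close>
definition LC :: "cvec set set" where
  "LC = {P \<in> ProjPlane. Re (qform (rep P)) < 0}"

definition dvis :: "cvec set \<Rightarrow> cvec set \<Rightarrow> real" where
  "dvis P Q = sqrt (cmod (herm (rep P) (rep Q)) / (norm (rep P) * norm (rep Q)))"

definition dE :: "cvec set \<Rightarrow> cvec set \<Rightarrow> real" where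
  "dE P Q = wedge_norm (rep P) (rep Q) / (norm (rep P) * norm (rep Q))"

definition chain_of :: "cvec set \<Rightarrow> cvec set set" where
  "chain_of w = {P \<in> S3. herm (rep P) (rep w) = 0}"

definition diam_wrt :: "('a \<Rightarrow> 'a \<Rightarrow> real) \<Rightarrow> 'a set \<Rightarrow> ennreal" where
  "diam_wrt d U = (SUP x\<in>U. SUP y\<in>U. ennreal (d x y))"

definition hausdorff_pre :: "('a \<Rightarrow> 'a \<Rightarrow> real) \<Rightarrow> real \<Rightarrow> real \<Rightarrow> 'a set \<Rightarrow> ennreal" where
  "hausdorff_pre d s \<delta> A =
     (Inf {(\<Sum>i. ennreal ((enn2real (diam_wrt d (U i))) powr s)) | U :: nat \<Rightarrow> 'a set.
          A \<subseteq> (\<Union>i. U i) \<and> (\<forall>i. diam_wrt d (U i) \<le> ennreal \<delta>)})"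

definition hausdorff_meas :: "('a \<Rightarrow> 'a \<Rightarrow> real) \<Rightarrow> real \<Rightarrow> 'a set \<Rightarrow> ennreal" where
  "hausdorff_meas d s A = (SUP \<delta>\<in>{0<..}. hausdorff_pre d s \<delta> A)"

definition eta :: "cvec set \<Rightarrow> cvec set set \<Rightarrow> ennreal" where
  "eta L B = hausdorff_meas dvis 2 (B \<inter> chain_of L)"

definition annulus :: "cvec set \<Rightarrow> real \<Rightarrow> real \<Rightarrow> cvec set set" where
  "annulus x r \<delta> = {y \<in> S3. r \<le> dvis x y \<and> dvis x y \<le> r + \<delta>}"

end

theory Submission
  imports Defs
begin

lemma three3: "(3::3) = 0" by simp

lemma sum3: "sum f (UNIV::3 set) = f 0 + f 1 + f 2"
  unfolding sum_3 three3 by (simp add: add_ac)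

lemma vec3_eq: "(x::'a^3) = y \<longleftrightarrow> x$0 = y$0 \<and> x$1 = y$1 \<and> x$2 = y$2"
  unfolding vec_eq_iff forall_3 three3 by auto

lemma normsq: "(norm (x::cvec))^2 = (cmod (x$0))^2 + (cmod (x$1))^2 + (cmod (x$2))^2"
  by (simp add: norm_vec_def L2_set_def sum3)

lemma herm_std_self: "herm_std u u = of_real ((norm u)^2)"
  unfolding herm_std_def normsq
  by (simp add: complex_mult_cnj cmod_power2 del: of_real_power)

lemma inner_herm_std: "inner u v = Re (herm_std u v)"
  by (simp add: inner_vec_def sum3 herm_std_def inner_complex_def)

lemma herm_std_lin1: "herm_std (a *s u + b *s v) z = a * herm_std u z + b * herm_std v z"
  by (simp add: herm_std_def algebra_simps)
lemma herm_std_smult1: "herm_std (a *s u) z = a * herm_std u z"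
  by (simp add: herm_std_def algebra_simps)
lemma herm_std_smult2: "herm_std u (a *s z) = cnj a * herm_std u z"
  by (simp add: herm_std_def algebra_simps)

lemma cs_std: "cmod (herm_std u v) \<le> norm u * norm v"
proof (cases "herm_std u v = 0")
  case True then show ?thesis by simp
next
  case False
  define l where "l = sgn (herm_std u v)"
  have sq: "cmod z * cmod z = Re z * Re z + Im z * Im z" for z
    by (metis cmod_power2 power2_eq_square)
  have "cmod (herm_std u v) = Re (herm_std u (l *s v))"
    unfolding herm_std_smult2 l_def
    by (simp add: sgn_eq complex_mult_cnj divide_simps mult.commute sq power2_eq_square)
  also have "\<dots> = inner u (l *s v)" by (simp add: inner_herm_std)
  also have "\<dots> \<le> norm u * norm (l *s v)" by (rule norm_cauchy_schwarz)
  also have "norm (l *s v) = norm v"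
    using False by (simp add: l_def norm_vec_def L2_set_def sum3 norm_mult norm_sgn)
  finally show ?thesis by simp
qed

definition Jm :: "cvec \<Rightarrow> cvec" where
  "Jm v = (\<chi> i. if i = 0 then v$0 else - v$i)"

lemma Jm_nth: "Jm v $ 0 = v$0" "Jm v $ 1 = - v$1" "Jm v $ 2 = - v$2"
  by (simp_all add: Jm_def)

lemma herm_Jm: "herm u v = herm_std u (Jm v)"
  by (simp add: herm_def herm_std_def Jm_nth)

lemma norm_Jm: "norm (Jm v) = norm v"
proof -
  have "(norm (Jm v))^2 = (norm v)^2" unfolding normsq Jm_nth by simp
  then show ?thesis by (simp add: power2_eq_iff_nonneg)
qed

lemma cs_herm: "cmod (herm u v) \<le> norm u * norm v"
  using cs_std[of u "Jm v"] by (simp add: herm_Jm norm_Jm)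

lemma herm_lin1: "herm (a *s u + b *s v) z = a * herm u z + b * herm v z"
  by (simp add: herm_def algebra_simps)
lemma herm_smult1: "herm (a *s u) z = a * herm u z"
  by (simp add: herm_def algebra_simps)
lemma herm_smult2: "herm u (a *s z) = cnj a * herm u z"
  by (simp add: herm_def algebra_simps)
lemma herm_add1: "herm (u + v) z = herm u z + herm v z"
  by (simp add: herm_def algebra_simps)
lemma herm_diff1: "herm (u - v) z = herm u z - herm v z"
  by (simp add: herm_def algebra_simps)
lemma herm_add2: "herm z (u + v) = herm z u + herm z v"
  by (simp add: herm_def algebra_simps)
lemma herm_diff2: "herm z (u - v) = herm z u - herm z v"
  by (simp add: herm_def algebra_simps)
lemma herm_cnj: "herm v u = cnj (herm u v)"
  by (simp add: herm_def)
lemma herm_self_real: "herm u u = of_real (Re (herm u u))"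
  by (simp add: herm_def complex_mult_cnj del: of_real_power)
lemma herm_std_cnj: "herm_std v u = cnj (herm_std u v)"
  by (simp add: herm_std_def)
lemma herm_zero1[simp]: "herm 0 v = 0" by (simp add: herm_def)
lemma herm_zero2[simp]: "herm v 0 = 0" by (simp add: herm_def)


definition mk3 :: "complex \<Rightarrow> complex \<Rightarrow> complex \<Rightarrow> cvec" where
  "mk3 a b c = (\<chi> i. if i = 0 then a else if i = 1 then b else c)"
lemma mk3_nth[simp]: "mk3 a b c $ 0 = a" "mk3 a b c $ 1 = b" "mk3 a b c $ 2 = c"
  by (simp_all add: mk3_def)

lemma cmod_sq_c: "complex_of_real ((cmod z)^2) = z * cnj z"
  by (simp add: complex_mult_cnj cmod_power2 del: of_real_power)

definition sw :: "cvec \<Rightarrow> real" where "sw w = (cmod (w$1))^2 + (cmod (w$2))^2"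
definition kp :: "cvec \<Rightarrow> real" where "kp w = sw w - (cmod (w$0))^2"
definition fv :: "cvec \<Rightarrow> cvec" where "fv w = mk3 0 (cnj (w$2)) (- cnj (w$1))"
definition gv :: "cvec \<Rightarrow> cvec" where
  "gv w = mk3 (of_real (sw w)) (cnj (w$0) * w$1) (cnj (w$0) * w$2)"

lemma sw_c: "complex_of_real (sw w) = w$1 * cnj (w$1) + w$2 * cnj (w$2)"
  unfolding sw_def of_real_add cmod_sq_c ..
lemma kp_c: "complex_of_real (kp w) = w$1 * cnj (w$1) + w$2 * cnj (w$2) - w$0 * cnj (w$0)"
  unfolding kp_def of_real_diff sw_c cmod_sq_c ..
lemma re_mult_cnj: "Re (z * cnj z) = (cmod z)^2"
  by (metis cmod_sq_c Re_complex_of_real)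
lemma kp_q: "kp w = - Re (qform w)"
  unfolding kp_def sw_def qform_def herm_def minus_complex.sel re_mult_cnj by simp

lemma herm_gg: "herm (gv w) (gv w) = of_real (sw w * kp w)"
  unfolding herm_def gv_def mk3_nth of_real_mult sw_c kp_c by (simp add: algebra_simps)
lemma herm_ff: "herm (fv w) (fv w) = - of_real (sw w)"
  unfolding herm_def fv_def mk3_nth sw_c by (simp add: algebra_simps)
lemma herm_gf: "herm (gv w) (fv w) = 0"
  unfolding herm_def fv_def gv_def mk3_nth by (simp add: algebra_simps)
lemma herm_gw: "herm (gv w) w = 0"
  unfolding herm_def gv_def mk3_nth sw_c by (simp add: algebra_simps)
lemma herm_fw: "herm (fv w) w = 0"
  unfolding herm_def fv_def mk3_nth by (simp add: algebra_simps)
lemma herm_ww: "herm w w = - of_real (kp w)"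
  unfolding herm_def kp_c by (simp add: algebra_simps)
lemma norm_gv: "(norm (gv w))^2 = sw w * (norm w)^2"
proof -
  have "complex_of_real ((norm (gv w))^2) = complex_of_real (sw w * (norm w)^2)"
    unfolding normsq of_real_add of_real_mult cmod_sq_c gv_def mk3_nth sw_c by (simp add: algebra_simps)
  then show ?thesis using of_real_eq_iff by blast
qed
lemma norm_fv: "(norm (fv w))^2 = sw w"
  unfolding normsq fv_def mk3_nth sw_def by simp

lemma decomp: "(of_real (sw w * kp w)) *s x =
   herm x (gv w) *s gv w - of_real (kp w) * herm x (fv w) *s fv w - of_real (sw w) * herm x w *s w"
  unfolding vec3_eq herm_def gv_def fv_def of_real_mult
  by (simp add: sw_c kp_c algebra_simps)


lemma sw_ge_kp: "kp w \<le> sw w" by (simp add: kp_def)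

definition e1 :: "cvec \<Rightarrow> cvec" where "e1 w = of_real (1 / sqrt (sw w * kp w)) *s gv w"
definition e2 :: "cvec \<Rightarrow> cvec" where "e2 w = of_real (1 / sqrt (sw w)) *s fv w"
definition wn :: "cvec \<Rightarrow> cvec" where "wn w = of_real (1 / sqrt (kp w)) *s w"

lemma herm_ofreal2: "herm u (of_real c *s v) = of_real c * herm u v"
  by (simp add: herm_smult2)

lemma decomp_n:
  assumes "kp w > 0"
  shows "x = herm x (e1 w) *s e1 w - herm x (e2 w) *s e2 w - herm x (wn w) *s wn w"
proof -
  have s: "sw w > 0" using assms sw_ge_kp[of w] by linarith
  have q1: "sqrt (sw w * kp w) * sqrt (sw w * kp w) = sw w * kp w" using s assms by simp
  have q2: "sqrt (sw w) * sqrt (sw w) = sw w" using s by simp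
  have q3: "sqrt (kp w) * sqrt (kp w) = kp w" using assms by simp
  have D: "of_real (sw w * kp w) * x$i =
   herm x (gv w) * gv w $i - of_real (kp w) * herm x (fv w) * fv w $i - of_real (sw w) * herm x w * w $i" for i
    using arg_cong[OF decomp[of w x], of "\<lambda>v. v$i"] by simp
  have "of_real (sw w * kp w) * x$i = of_real (sw w * kp w) * (herm x (e1 w) *s e1 w - herm x (e2 w) *s e2 w - herm x (wn w) *s wn w) $ i" for i
  proof -
    have V: "(herm x (e1 w) *s e1 w - herm x (e2 w) *s e2 w - herm x (wn w) *s wn w) $ i
       = of_real (1 / sqrt (sw w * kp w) * (1 / sqrt (sw w * kp w))) * herm x (gv w) * gv w $ i
        - of_real (1 / sqrt (sw w) * (1 / sqrt (sw w))) * herm x (fv w) * fv w $ i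
        - of_real (1 / sqrt (kp w) * (1 / sqrt (kp w))) * herm x w * w $ i"
      unfolding e1_def e2_def wn_def herm_ofreal2 vector_minus_component vector_smult_component of_real_mult
      by (simp only: ac_simps)
    also have "\<dots> = of_real (1 / (sw w * kp w)) * herm x (gv w) * gv w $ i
        - of_real (1 / sw w) * herm x (fv w) * fv w $ i
        - of_real (1 / kp w) * herm x w * w $ i"
    proof -
      have r1: "1 / sqrt (sw w * kp w) * (1 / sqrt (sw w * kp w)) = 1 / (sw w * kp w)"
        using q1 by (simp add: divide_simps)
      have r2: "1 / sqrt (sw w) * (1 / sqrt (sw w)) = 1 / sw w" using q2 by (simp add: divide_simps)
      have r3: "1 / sqrt (kp w) * (1 / sqrt (kp w)) = 1 / kp w" using q3 by (simp add: divide_simps)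
      show ?thesis unfolding r1 r2 r3 ..
    qed
    finally have V': "(herm x (e1 w) *s e1 w - herm x (e2 w) *s e2 w - herm x (wn w) *s wn w) $ i = 
       of_real (1 / (sw w * kp w)) * herm x (gv w) * gv w $ i
        - of_real (1 / sw w) * herm x (fv w) * fv w $ i
        - of_real (1 / kp w) * herm x w * w $ i" .
    have n1: "complex_of_real (sw w) \<noteq> 0" "complex_of_real (kp w) \<noteq> 0" using s assms by auto
    show ?thesis unfolding V' D using n1 by (simp add: field_simps)
  qed
  moreover have "complex_of_real (sw w * kp w) \<noteq> 0" using s assms by simp
  ultimately show ?thesis unfolding vec_eq_iff by (meson mult_left_cancel)
qed


lemma norm_smult: "norm (c *s (v::cvec)) = cmod c * norm v"
proof -
  have "(norm (c *s v))^2 = (cmod c * norm v)^2"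
    unfolding normsq power_mult_distrib by (simp add: norm_mult power_mult_distrib algebra_simps)
  then show ?thesis by (simp add: power2_eq_iff_nonneg)
qed

lemma herm_ofreal1: "herm (of_real c *s u) v = of_real c * herm u v"
  by (simp add: herm_smult1)

lemma sqrt_sq_inv: "a > 0 \<Longrightarrow> (1 / sqrt a)^2 = 1 / a"
  by (simp add: power_divide)

context
  fixes w :: cvec assumes kpos: "kp w > 0"
begin

lemma swpos: "sw w > 0" using kpos sw_ge_kp[of w] by linarith

lemma norm_e1: "(norm (e1 w))^2 = (norm w)^2 / kp w"
proof -
  have "(norm (e1 w))^2 = (1 / sqrt (sw w * kp w))^2 * (norm (gv w))^2"
    unfolding e1_def norm_smult norm_of_real power_mult_distrib power2_abs ..
  also have "\<dots> = (norm w)^2 / kp w" unfolding norm_gv using swpos kpos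
    by (simp add: power_divide)
  finally show ?thesis .
qed

lemma norm_e2: "norm (e2 w) = 1"
proof -
  have "(norm (e2 w))^2 = (1 / sqrt (sw w))^2 * (norm (fv w))^2"
    unfolding e2_def norm_smult norm_of_real power_mult_distrib power2_abs ..
  also have "\<dots> = 1" unfolding norm_fv using swpos by (simp add: power_divide)
  finally have "(norm (e2 w))^2 = 1^2" by simp
  then show ?thesis by (metis norm_ge_zero power2_eq_iff_nonneg zero_le_one)
qed

lemma norm_wn: "(norm (wn w))^2 = (norm w)^2 / kp w"
  unfolding wn_def norm_smult norm_of_real using kpos by (simp add: power_mult_distrib power_divide del: of_real_divide)

lemma herm_e1e1: "herm (e1 w) (e1 w) = 1"
proof -
  have "herm (e1 w) (e1 w) = of_real ((1 / sqrt (sw w * kp w))^2 * (sw w * kp w))"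
    unfolding e1_def herm_ofreal1 herm_ofreal2 herm_gg by (simp only: of_real_mult power2_eq_square mult_ac)
  also have "\<dots> = 1"
  proof -
    have "(1 / sqrt (sw w * kp w))^2 * (sw w * kp w) = 1" using swpos kpos by (simp add: power_divide)
    then show ?thesis by simp
  qed
  finally show ?thesis .
qed

lemma herm_e2e2: "herm (e2 w) (e2 w) = -1"
proof -
  have "herm (e2 w) (e2 w) = - of_real ((1 / sqrt (sw w))^2 * sw w)"
    unfolding e2_def herm_ofreal1 herm_ofreal2 herm_ff by (simp only: of_real_mult of_real_minus power2_eq_square mult_ac mult_minus_right mult_minus_left)
  also have "\<dots> = -1"
  proof -
    have "(1 / sqrt (sw w))^2 * sw w = 1" using swpos by (simp add: power_divide)
    then show ?thesis by simp
  qed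
  finally show ?thesis .
qed

lemma herm_e1e2: "herm (e1 w) (e2 w) = 0"
  unfolding e1_def e2_def herm_ofreal1 herm_ofreal2 herm_gf by simp

lemma herm_e2e1: "herm (e2 w) (e1 w) = 0"
  using herm_e1e2 herm_cnj by (metis complex_cnj_zero)

lemma herm_wn0: "herm x w = 0 \<Longrightarrow> herm x (wn w) = 0"
  unfolding wn_def herm_ofreal2 by simp

lemma herm_e1w: "herm (e1 w) w = 0"
  unfolding e1_def herm_ofreal1 herm_gw by simp
lemma herm_e2w: "herm (e2 w) w = 0"
  unfolding e2_def herm_ofreal1 herm_fw by simp

lemma parseval: "herm x x = herm x (e1 w) * cnj (herm x (e1 w)) - herm x (e2 w) * cnj (herm x (e2 w))
    - herm x (wn w) * cnj (herm x (wn w))"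
proof -
  have "herm x x = herm (herm x (e1 w) *s e1 w - herm x (e2 w) *s e2 w - herm x (wn w) *s wn w) x"
    using decomp_n[OF kpos, of x] by simp
  also have "\<dots> = herm x (e1 w) * herm (e1 w) x - herm x (e2 w) * herm (e2 w) x - herm x (wn w) * herm (wn w) x"
    by (simp add: herm_diff1 herm_smult1)
  finally show ?thesis by (metis herm_cnj)
qed

end


definition line :: "cvec \<Rightarrow> cvec set" where "line u = range (\<lambda>c::complex. c *s u)"

lemma line_in: "u \<noteq> 0 \<Longrightarrow> line u \<in> ProjPlane"
  unfolding ProjPlane_def proj_pt_def line_def by blast

lemma rep_props: assumes "P \<in> ProjPlane" shows "rep P \<in> P" "rep P \<noteq> 0"
proof -
  obtain u where u: "u \<noteq> 0" "P = range (\<lambda>c::complex. c *s u)"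
    using assms unfolding ProjPlane_def proj_pt_def by blast
  have "u = (1::complex) *s u" by simp
  then have "u \<in> P" using u by (metis rangeI)
  then have "\<exists>u. u \<in> P \<and> u \<noteq> 0" using u by blast
  then have "rep P \<in> P \<and> rep P \<noteq> 0" unfolding rep_def by (rule someI_ex)
  then show "rep P \<in> P" "rep P \<noteq> 0" by auto
qed

lemma line_smult: "c \<noteq> 0 \<Longrightarrow> line (c *s u) = line u"
proof -
  assume c: "c \<noteq> 0"
  have "line (c *s u) \<subseteq> line u" unfolding line_def by (auto simp: vector_smult_assoc)
  moreover have "line u \<subseteq> line (c *s u)"
  proof
    fix v assume "v \<in> line u"
    then obtain d where "v = d *s u" unfolding line_def by auto
    then have "v = (d / c) *s (c *s u)" using c by (simp add: vector_smult_assoc)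
    then show "v \<in> line (c *s u)" unfolding line_def by (metis rangeI)
  qed
  ultimately show ?thesis by auto
qed

lemma rep_line: assumes "u \<noteq> 0" shows "\<exists>c. c \<noteq> 0 \<and> rep (line u) = c *s u"
proof -
  have "rep (line u) \<in> line u" "rep (line u) \<noteq> 0" using rep_props line_in assms by auto
  then obtain c where "rep (line u) = c *s u" unfolding line_def by auto
  with \<open>rep (line u) \<noteq> 0\<close> show ?thesis by auto
qed

lemma line_rep: assumes "P \<in> ProjPlane" shows "P = line (rep P)"
proof -
  obtain u where u: "u \<noteq> 0" "P = line u"
    using assms unfolding ProjPlane_def proj_pt_def line_def by blast
  obtain c where "c \<noteq> 0" "rep (line u) = c *s u" using rep_line u(1) by blast
  then show ?thesis using u line_smult by metis
qed

definition dv :: "cvec \<Rightarrow> cvec \<Rightarrow> real" where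
  "dv u v = sqrt (cmod (herm u v) / (norm u * norm v))"

lemma dv_smult: assumes "a \<noteq> 0" "b \<noteq> 0" shows "dv (a *s u) (b *s v) = dv u v"
proof -
  have "herm (a *s u) (b *s v) = a * cnj b * herm u v" by (simp add: herm_smult1 herm_smult2)
  then have "cmod (herm (a *s u) (b *s v)) / (norm (a *s u) * norm (b *s v))
      = (cmod a * cmod b * cmod (herm u v)) / ((cmod a * cmod b) * (norm u * norm v))"
    by (simp add: norm_smult norm_mult mult_ac)
  also have "\<dots> = cmod (herm u v) / (norm u * norm v)" using assms by simp
  finally show ?thesis unfolding dv_def by simp
qed

lemma dvis_line: assumes "P \<in> ProjPlane" "v \<noteq> 0" shows "dvis P (line v) = dv (rep P) v"
proof -
  obtain c where "c \<noteq> 0" "rep (line v) = c *s v" using rep_line assms(2) by blast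
  then show ?thesis unfolding dvis_def dv_def[symmetric] 
    using dv_smult[of 1 c "rep P" v] by simp
qed

lemma dvis_line2: assumes "u \<noteq> 0" "v \<noteq> 0" shows "dvis (line u) (line v) = dv u v"
proof -
  obtain c where "c \<noteq> 0" "rep (line u) = c *s u" using rep_line assms(1) by blast
  moreover obtain d where "d \<noteq> 0" "rep (line v) = d *s v" using rep_line assms(2) by blast
  ultimately show ?thesis unfolding dvis_def dv_def[symmetric] using dv_smult by simp
qed

lemma dv_nonneg: "dv u v \<ge> 0" unfolding dv_def by simp

lemma dvis_nonneg: "dvis P Q \<ge> 0" unfolding dvis_def by simp

lemma cmod_1_cis: "cmod (1 - cis x) \<le> \<bar>x\<bar>"
proof -
  have "(cmod (1 - cis x))^2 = (1 - cos x)^2 + (sin x)^2"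
    by (simp add: cmod_power2 cis.sel)
  also have "\<dots> = 2 - 2 * cos x" by (simp add: power2_eq_square algebra_simps sin_squared_eq)
  also have "\<dots> = 4 * (sin (x/2))^2" using cos_double_sin[of "x/2"] by simp
  also have "\<dots> \<le> 4 * (x/2)^2"
    using abs_sin_x_le_abs_x[of "x/2"] abs_le_square_iff[of "sin (x/2)" "x/2"] by simp
  also have "\<dots> = x^2" by (simp add: power_divide)
  finally have "(cmod (1 - cis x))^2 \<le> \<bar>x\<bar>^2" by simp
  then show ?thesis using abs_le_square_iff[of "cmod (1 - cis x)" x] by simp
qed


definition uu :: "cvec \<Rightarrow> real \<Rightarrow> cvec" where "uu w t = e1 w + cis t *s e2 w"

context
  fixes w :: cvec assumes kpos: "kp w > 0"
begin

lemma herm_uu_e1: "herm (uu w t) (e1 w) = 1"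
  unfolding uu_def herm_add1 herm_smult1 herm_e1e1[OF kpos] herm_e2e1[OF kpos] by simp

lemma uu_nz: "uu w t \<noteq> 0"
proof
  assume "uu w t = 0"
  then show False using herm_uu_e1[of t] by simp
qed

lemma herm_uu: "herm (uu w s) (uu w t) = 1 - cis (s - t)"
proof -
  have "herm (uu w s) (uu w t) = 1 - cis s * cnj (cis t)"
    unfolding uu_def herm_add1 herm_add2 herm_smult1 herm_smult2
      herm_e1e1[OF kpos] herm_e2e1[OF kpos] herm_e1e2[OF kpos] herm_e2e2[OF kpos] by simp
  also have "cis s * cnj (cis t) = cis (s - t)" by (simp add: cis_cnj cis_mult)
  finally show ?thesis .
qed

lemma norm_e1_pos: "norm (e1 w) > 0"
proof -
  have "e1 w \<noteq> 0"
  proof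
    assume "e1 w = 0" then show False using herm_e1e1[OF kpos] by simp
  qed
  then show ?thesis by simp
qed

lemma norm_uu_lb: "norm (uu w t) \<ge> 1 / norm (e1 w)"
proof -
  have "1 \<le> norm (uu w t) * norm (e1 w)" using cs_herm[of "uu w t" "e1 w"] herm_uu_e1 by simp
  then show ?thesis using norm_e1_pos by (simp add: divide_simps)
qed

lemma norm_uu_ub: "norm (uu w t) \<le> norm (e1 w) + 1"
proof -
  have "norm (uu w t) \<le> norm (e1 w) + norm (cis t *s e2 w)" unfolding uu_def by (rule norm_triangle_ineq)
  then show ?thesis by (simp add: norm_smult norm_e2[OF kpos])
qed

lemma holder: "(dv (uu w s) (uu w t))^2 \<le> (norm (e1 w))^2 * \<bar>s - t\<bar>"
proof -
  have lb: "1 / (norm (e1 w))^2 \<le> norm (uu w s) * norm (uu w t)"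
    using mult_mono[OF norm_uu_lb[of s] norm_uu_lb[of t]] norm_e1_pos
    by (simp add: power2_eq_square)
  have pos: "0 < norm (uu w s) * norm (uu w t)" using uu_nz by simp
  have "(dv (uu w s) (uu w t))^2 = cmod (1 - cis (s - t)) / (norm (uu w s) * norm (uu w t))"
    unfolding dv_def herm_uu by simp
  also have "\<dots> \<le> \<bar>s - t\<bar> / (norm (uu w s) * norm (uu w t))"
    using pos cmod_1_cis by (simp add: divide_right_mono)
  also have "\<dots> \<le> \<bar>s - t\<bar> / (1 / (norm (e1 w))^2)"
    by (rule divide_left_mono[OF lb]) (use pos norm_e1_pos in auto)
  also have "\<dots> = (norm (e1 w))^2 * \<bar>s - t\<bar>" by simp
  finally show ?thesis .
qed

lemma chain_param:
  assumes "P \<in> S3" "herm (rep P) w = 0"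
  shows "\<exists>t. P = line (uu w t)"
proof -
  have PP: "P \<in> ProjPlane" using assms(1) unfolding S3_def by auto
  define v where "v = rep P"
  have vnz: "v \<noteq> 0" using rep_props(2)[OF PP] v_def by simp
  have q0: "herm v v = 0" using assms(1) unfolding S3_def qform_def v_def by auto
  define p where "p = herm v (e1 w)"
  define q where "q = herm v (e2 w)"
  have a0: "herm v (wn w) = 0" using herm_wn0[OF kpos] assms(2) v_def by simp
  have dec: "v = p *s e1 w - q *s e2 w" using decomp_n[OF kpos, of v] a0 p_def q_def by simp
  have "p * cnj p = q * cnj q" using parseval[OF kpos, of v] q0 a0 p_def q_def by simp
  then have pq: "cmod p = cmod q"
    by (metis cmod_sq_c norm_ge_zero of_real_eq_iff power2_eq_iff_nonneg)
  have pnz: "p \<noteq> 0"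
  proof
    assume "p = 0"
    then have "q = 0" using pq by simp
    then show False using dec \<open>p = 0\<close> vnz by simp
  qed
  define z where "z = - q / p"
  have "q \<noteq> 0" using pq pnz by (metis norm_eq_zero)
  then have z1: "cmod z = 1" using pq pnz by (simp add: z_def norm_divide)
  then have "z \<noteq> 0" by auto
  then have zc: "cis (Arg z) = z" using cis_Arg[of z] z1 by (simp add: sgn_div_norm)
  have "v = p *s (e1 w + z *s e2 w)" using dec pnz
    by (simp add: z_def vector_add_ldistrib vector_smult_assoc)
  also have "\<dots> = p *s uu w (Arg z)" unfolding uu_def zc ..
  finally have "P = line (p *s uu w (Arg z))" using line_rep[OF PP] v_def by simp
  then show ?thesis using line_smult pnz by metis
qed

end

lemma interval_piece:
  fixes a b t :: real and N :: nat
  assumes "a \<le> t" "t \<le> b" "N > 0"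
  shows "\<exists>i<N. a + real i * ((b - a) / N) \<le> t \<and> t \<le> a + real (i + 1) * ((b - a) / N)"
proof (cases "a = b")
  case True then show ?thesis using assms by (intro exI[of _ 0]) auto
next
  case False
  define h where "h = (b - a) / N"
  have h: "h > 0" using False assms unfolding h_def by auto
  define k where "k = nat \<lfloor>(t - a) / h\<rfloor>"
  define i where "i = min (N - 1) k"
  have f0: "0 \<le> (t - a) / h" using assms(1) h by simp
  then have kk: "real k = real_of_int \<lfloor>(t - a) / h\<rfloor>" unfolding k_def by simp
  have k1: "real k \<le> (t - a) / h" unfolding kk by (rule of_int_floor_le)
  have k2: "(t - a) / h < real k + 1" unfolding kk by (rule real_of_int_floor_add_one_gt)
  have Nh: "real N * h = b - a" using assms(3) unfolding h_def by simp
  have "a + real i * h \<le> t"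
  proof -
    have "real i \<le> real k" unfolding i_def by simp
    also have "real k * h \<le> t - a" using k1 h by (simp add: field_simps)
    then show ?thesis using \<open>real i \<le> real k\<close> h by (smt (verit) mult_right_mono)
  qed
  moreover have "t \<le> a + real (i + 1) * h"
  proof (cases "k \<le> N - 1")
    case True
    then have "i = k" unfolding i_def by simp
    then show ?thesis using k2 h by (simp add: field_simps)
  next
    case False
    then have "i = N - 1" unfolding i_def by simp
    then have "real (i + 1) = real N" using assms(3) by simp
    then show ?thesis using Nh assms by simp
  qed
  moreover have "i < N" using assms(3) unfolding i_def by simp
  ultimately show ?thesis unfolding h_def by blast
qed

lemma diam_img_bound:
  fixes \<gamma> :: "real \<Rightarrow> 'a" and d :: "'a \<Rightarrow> 'a \<Rightarrow> real"
  assumes hol: "\<And>s t. (d (\<gamma> s) (\<gamma> t))^2 \<le> M * \<bar>s - t\<bar>" and M: "M \<ge> 0" and h: "h \<ge> 0"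
  shows "diam_wrt d (\<gamma> ` {c..c+h}) \<le> ennreal (sqrt (M * h))"
  unfolding diam_wrt_def
proof (intro SUP_least)
  fix x y assume "x \<in> \<gamma> ` {c..c+h}" "y \<in> \<gamma> ` {c..c+h}"
  then obtain s t where st: "x = \<gamma> s" "y = \<gamma> t" "s \<in> {c..c+h}" "t \<in> {c..c+h}" by auto
  have "\<bar>s - t\<bar> \<le> h" using st by auto
  then have "(d x y)^2 \<le> M * h" using hol[of s t] st M by (smt (verit) mult_left_mono)
  then have "d x y \<le> sqrt (M * h)" using real_le_rsqrt by blast
  then show "ennreal (d x y) \<le> ennreal (sqrt (M * h))" by (rule ennreal_leI)
qed

lemma term_bound:
  assumes "D \<le> ennreal (sqrt X)" "X \<ge> 0"
  shows "enn2real D powr 2 \<le> X"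
proof -
  have "enn2real D \<le> sqrt X" using enn2real_leI[OF _ assms(1)] assms(2) by simp
  then have "enn2real D powr 2 \<le> sqrt X powr 2" by (intro powr_mono2) auto
  also have "\<dots> = X"
  proof (cases "X = 0")
    case True then show ?thesis by simp
  next
    case False
    then have "sqrt X > 0" using assms(2) by simp
    then have "sqrt X powr 2 = sqrt X ^ 2" by (simp add: powr_numeral)
    then show ?thesis using assms(2) by simp
  qed
  finally show ?thesis .
qed

lemma haus_bound:
  fixes \<gamma> :: "real \<Rightarrow> 'a" and d :: "'a \<Rightarrow> 'a \<Rightarrow> real"
  assumes hol: "\<And>s t. (d (\<gamma> s) (\<gamma> t))^2 \<le> M * \<bar>s - t\<bar>" and M: "M \<ge> 0"
    and ab: "a1 \<le> b1" "a2 \<le> b2"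
    and A: "A \<subseteq> \<gamma> ` {a1..b1} \<union> \<gamma> ` {a2..b2}"
  shows "hausdorff_meas d 2 A \<le> ennreal (2 * M * ((b1 - a1) + (b2 - a2)))"
  unfolding hausdorff_meas_def
proof (intro SUP_least)
  fix \<delta> :: real assume "\<delta> \<in> {0<..}"
  then have dp: "\<delta> > 0" by simp
  define N :: nat where "N = nat \<lceil>M * ((b1 - a1) + (b2 - a2)) / \<delta>^2\<rceil> + 1"
  have Np: "N > 0" unfolding N_def by simp
  have NM: "M * ((b1 - a1) + (b2 - a2)) / \<delta>^2 \<le> real N" unfolding N_def by linarith
  define h1 where "h1 = (b1 - a1) / N"
  define h2 where "h2 = (b2 - a2) / N"
  have h1p: "h1 \<ge> 0" and h2p: "h2 \<ge> 0" using ab Np unfolding h1_def h2_def by auto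
  have "M * ((b1 - a1) + (b2 - a2)) \<le> real N * \<delta>^2" using NM dp by (simp add: divide_simps)
  then have "M * ((b1 - a1) + (b2 - a2)) / real N \<le> \<delta>^2" using Np by (simp add: divide_simps mult.commute)
  moreover have "M * (h1 + h2) = M * ((b1 - a1) + (b2 - a2)) / real N" unfolding h1_def h2_def by (metis add_divide_distrib times_divide_eq_right)
  ultimately have Mh: "M * (h1 + h2) \<le> \<delta>^2" by simp
  define U :: "nat \<Rightarrow> 'a set" where
    "U i = (if i < N then \<gamma> ` {a1 + real i * h1 .. a1 + real i * h1 + h1}
            else if i < 2 * N then \<gamma> ` {a2 + real (i - N) * h2 .. a2 + real (i - N) * h2 + h2} else {})" for i
  have diamU: "diam_wrt d (U i) \<le> ennreal (sqrt (M * (h1 + h2)))" for i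
  proof -
    have s1: "ennreal (sqrt (M * h1)) \<le> ennreal (sqrt (M * (h1 + h2)))"
      using M h2p by (intro ennreal_leI real_sqrt_le_mono mult_left_mono) auto
    have s2: "ennreal (sqrt (M * h2)) \<le> ennreal (sqrt (M * (h1 + h2)))"
      using M h1p by (intro ennreal_leI real_sqrt_le_mono mult_left_mono) auto
    show ?thesis
      using diam_img_bound[where d=d and \<gamma>=\<gamma> and M=M and h=h1, OF hol M h1p]
        diam_img_bound[where d=d and \<gamma>=\<gamma> and M=M and h=h2, OF hol M h2p] s1 s2
      unfolding U_def by (auto simp: diam_wrt_def intro: order_trans)
  qed
  have cover: "A \<subseteq> (\<Union>i. U i)"
  proof
    fix x assume "x \<in> A"
    then consider t where "t \<in> {a1..b1}" "x = \<gamma> t" | t where "t \<in> {a2..b2}" "x = \<gamma> t" using A by auto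
    then show "x \<in> (\<Union>i. U i)"
    proof cases
      case 1
      then obtain i where i: "i < N" "a1 + real i * h1 \<le> t" "t \<le> a1 + real (i + 1) * h1"
        using interval_piece[of a1 t b1 N] Np unfolding h1_def by auto
      then have "x \<in> U i" unfolding U_def using 1 by (auto simp: algebra_simps)
      then show ?thesis by blast
    next
      case 2
      then obtain i where i: "i < N" "a2 + real i * h2 \<le> t" "t \<le> a2 + real (i + 1) * h2"
        using interval_piece[of a2 t b2 N] Np unfolding h2_def by auto
      then have "x \<in> U (N + i)" unfolding U_def using 2 by (auto simp: algebra_simps)
      then show ?thesis by blast
    qed
  qed
  have small: "diam_wrt d (U i) \<le> ennreal \<delta>" for i
  proof -
    have "sqrt (M * (h1 + h2)) \<le> \<delta>" using Mh dp real_le_lsqrt by (simp add: real_sqrt_le_iff) 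
    then show ?thesis using diamU[of i] by (meson ennreal_leI order_trans)
  qed
  have mem: "(\<Sum>i. ennreal ((enn2real (diam_wrt d (U i))) powr 2)) \<in>
     {(\<Sum>i. ennreal ((enn2real (diam_wrt d (U i))) powr 2)) | U :: nat \<Rightarrow> 'a set.
          A \<subseteq> (\<Union>i. U i) \<and> (\<forall>i. diam_wrt d (U i) \<le> ennreal \<delta>)}"
    using cover small by blast
  have "(\<Sum>i. ennreal ((enn2real (diam_wrt d (U i))) powr 2))
      \<le> (\<Sum>i. (if i < 2 * N then ennreal (M * (h1 + h2)) else 0))"
  proof (rule suminf_le)
    fix i show "ennreal ((enn2real (diam_wrt d (U i))) powr 2) \<le> (if i < 2 * N then ennreal (M * (h1 + h2)) else 0)"
    proof (cases "i < 2 * N")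
      case True
      then show ?thesis using term_bound[OF diamU[of i]] M h1p h2p by (simp add: ennreal_leI)
    next
      case False
      then have "U i = {}" unfolding U_def by simp
      then show ?thesis using False by (simp add: diam_wrt_def bot_ennreal)
    qed
  qed auto
  also have "\<dots> = (\<Sum>i<2 * N. ennreal (M * (h1 + h2)))"
    by (subst suminf_finite[of "{..<2 * N}"]) auto
  also have "\<dots> = ennreal (real (2 * N) * (M * (h1 + h2)))"
    using M h1p h2p by (simp add: ennreal_mult' ennreal_of_nat_eq_real_of_nat)
  also have "real (2 * N) * (M * (h1 + h2)) = 2 * M * ((b1 - a1) + (b2 - a2))"
    using Np unfolding h1_def h2_def by (simp add: field_simps)
  finally have "(\<Sum>i. ennreal ((enn2real (diam_wrt d (U i))) powr 2)) \<le> ennreal (2 * M * ((b1 - a1) + (b2 - a2)))" .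
  then show "hausdorff_pre d 2 \<delta> A \<le> ennreal (2 * M * ((b1 - a1) + (b2 - a2)))"
    unfolding hausdorff_pre_def using mem by (meson Inf_lower order_trans)
qed


lemma sin_lower: assumes "0 \<le> y" "y \<le> pi / 2" shows "y / 4 \<le> sin y"
proof (cases "y \<le> 1")
  case True
  show ?thesis
  proof (cases "y = 0")
    case True then show ?thesis by simp
  next
    case False
    then have yp: "0 < y" using assms by simp
    obtain z where z: "0 < z" "z < y" "sin y - sin 0 = (y - 0) * cos z"
      using MVT2[of 0 y sin cos] yp by (auto intro: DERIV_sin)
    have "1 \<le> pi / 3" using pi_gt3 by simp
    then have "cos (pi / 3) \<le> cos z" using z True
      by (intro cos_monotone_0_pi_le) auto
    then have "1/2 \<le> cos z" by (simp add: cos_60)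
    then have "y * (1/2) \<le> y * cos z" using yp by (intro mult_left_mono) auto
    then show ?thesis using z yp by simp
  qed
next
  case False
  have "1 \<le> pi / 3" using pi_gt3 by simp
  then have "cos (pi / 3) \<le> cos (1::real)" by (intro cos_monotone_0_pi_le) auto
  then have c1: "1/2 \<le> cos (1::real)" by (simp add: cos_60)
  have "sin (1::real) \<le> sin y" using False assms pi_gt3 by (subst sin_mono_le_eq) auto
  moreover have "cos (1::real) \<le> sin 1"
  proof -
    have "sin (1::real) = cos (pi/2 - 1)" by (simp add: cos_sin_eq)
    moreover have "pi/2 - 1 \<le> (1::real)" using pi_less_4 by simp
    moreover have "cos (1::real) \<le> cos (pi/2 - 1)" using pi_gt3 calculation(2) by (intro cos_monotone_0_pi_le) auto
    ultimately show ?thesis by simp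
  qed
  moreover have "y / 4 \<le> 1/2" using assms pi_less_4 by simp
  ultimately show ?thesis using c1 by linarith
qed

lemma arccos_holder:
  assumes "-1 \<le> a" "a \<le> b" "b \<le> 1"
  shows "arccos a - arccos b \<le> 6 * sqrt (b - a)"
proof -
  define \<alpha> where "\<alpha> = arccos b"
  define \<beta> where "\<beta> = arccos a"
  have ab: "0 \<le> \<alpha>" "\<alpha> \<le> \<beta>" "\<beta> \<le> pi" unfolding \<alpha>_def \<beta>_def
    using assms arccos_le_arccos arccos_bounded by auto
  have ca: "cos \<alpha> = b" "cos \<beta> = a" unfolding \<alpha>_def \<beta>_def using assms by auto
  define y where "y = (\<beta> - \<alpha>) / 2"
  define m where "m = (\<alpha> + \<beta>) / 2"
  have y: "0 \<le> y" "y \<le> pi / 2" using ab unfolding y_def by auto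
  have "b - a = 2 * sin m * sin y" unfolding m_def y_def ca[symmetric] by (rule cos_diff_cos)
  moreover have "sin y \<le> sin m"
  proof (cases "m \<le> pi / 2")
    case True
    then show ?thesis using ab y unfolding m_def y_def by (subst sin_mono_le_eq) auto
  next
    case False
    have "sin m = sin (pi - m)" by simp
    moreover have "sin y \<le> sin (pi - m)"
    proof -
      have h1: "-(pi/2) \<le> pi - m" using ab y False pi_gt_zero unfolding m_def y_def by (simp add: field_simps)
      have h2: "pi - m \<le> pi/2" using ab y False unfolding m_def y_def by (simp add: field_simps)
      have h3: "-(pi/2) \<le> y" using ab y False unfolding m_def y_def by (simp add: field_simps)
      have h5: "y \<le> pi - m" using ab y False unfolding m_def y_def by (simp add: field_simps)
      note h = h1 h2 h3 y(2) h5
      then show ?thesis using sin_mono_le_eq[of y "pi - m"] by simp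
    qed
    ultimately show ?thesis by simp
  qed
  moreover have "0 \<le> sin y" using y sin_ge_zero by (simp add: pi_ge_zero)
  ultimately have "2 * sin y * sin y \<le> b - a" by (simp add: mult_right_mono)
  moreover have "y / 4 * (y / 4) \<le> sin y * sin y" using sin_lower[OF y] y by (intro mult_mono) auto
  ultimately have "y^2 \<le> 8 * (b - a)" by (simp add: power2_eq_square)
  then have "y \<le> sqrt (8 * (b - a))" using real_le_rsqrt by blast
  also have "sqrt (8 * (b - a)) = sqrt 8 * sqrt (b - a)" by (rule real_sqrt_mult)
  finally have "\<beta> - \<alpha> \<le> 2 * sqrt 8 * sqrt (b - a)" unfolding y_def by simp
  moreover have "sqrt 8 \<le> 3" by (rule real_le_lsqrt) auto
  then have "2 * sqrt 8 * sqrt (b - a) \<le> 6 * sqrt (b - a)"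
    using assms(2) by (intro mult_right_mono) auto
  ultimately show ?thesis unfolding \<alpha>_def \<beta>_def by linarith
qed

lemma cos_interval:
  fixes \<theta> c1 c2 :: real
  assumes "c1 \<le> cos \<theta>" "cos \<theta> \<le> c2"
  defines "a0 \<equiv> arccos (min 1 c2)" and "b0 \<equiv> arccos (max (-1) c1)"
  shows "\<exists>n\<in>\<int>. (\<theta> - 2 * n * pi \<in> {a0..b0} \<or> \<theta> - 2 * n * pi \<in> {-b0..-a0})"
    and "b0 - a0 \<le> 6 * sqrt (c2 - c1)"
proof -
  define t where "t = arccos (cos \<theta>)"
  have "cos t = cos \<theta>" unfolding t_def by simp
  then obtain n where n: "n \<in> \<int>" "\<theta> = t + 2 * n * pi \<or> \<theta> = - t + 2 * n * pi"
    using cos_eq[of \<theta> t] by metis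
  have "a0 \<le> t" unfolding a0_def t_def using assms(2) by (intro arccos_le_arccos) auto
  moreover have "t \<le> b0" unfolding b0_def t_def using assms(1) by (intro arccos_le_arccos) auto
  ultimately show "\<exists>n\<in>\<int>. (\<theta> - 2 * n * pi \<in> {a0..b0} \<or> \<theta> - 2 * n * pi \<in> {-b0..-a0})"
    using n by (intro bexI[of _ n]) auto
  have cc: "c1 \<le> 1" "-1 \<le> c2" "c1 \<le> c2" using assms(1,2) cos_le_one[of \<theta>] cos_ge_minus_one[of \<theta>] by linarith+
  have "b0 - a0 \<le> 6 * sqrt (min 1 c2 - max (-1) c1)" unfolding a0_def b0_def
    using cc by (intro arccos_holder) auto
  also have "\<dots> \<le> 6 * sqrt (c2 - c1)"
  proof -
    have "c1 \<le> 1" "-1 \<le> c2" using assms(1,2) cos_le_one[of \<theta>] cos_ge_minus_one[of \<theta>] by linarith+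
    then show ?thesis by simp
  qed
  finally show "b0 - a0 \<le> 6 * sqrt (c2 - c1)" .
qed


lemma cmod_sq_expand: "(cmod (p + c * q))^2 = (cmod p)^2 + (cmod q)^2 * (cmod c)^2 + 2 * Re (p * cnj q * cnj c)"
proof -
  have "complex_of_real ((cmod (p + c * q))^2) = (p + c * q) * cnj (p + c * q)" by (rule cmod_sq_c)
  also have "\<dots> = p * cnj p + (q * cnj q) * (c * cnj c) + (p * cnj q * cnj c + cnj (p * cnj q * cnj c))"
    by (simp add: algebra_simps)
  also have "p * cnj q * cnj c + cnj (p * cnj q * cnj c) = of_real (2 * Re (p * cnj q * cnj c))"
    by (rule complex_add_cnj)
  finally have "complex_of_real ((cmod (p + c * q))^2) = 
     complex_of_real ((cmod p)^2 + (cmod q)^2 * (cmod c)^2 + 2 * Re (p * cnj q * cnj c))"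
    by (simp add: cmod_sq_c[symmetric] del: of_real_power)
  then show ?thesis using of_real_eq_iff by blast
qed

lemma normsq_std: "complex_of_real ((norm v)^2) = herm_std v v"
  by (simp add: herm_std_self)

lemma herm_std_add1: "herm_std (u + v) z = herm_std u z + herm_std v z"
  by (simp add: herm_std_def algebra_simps)
lemma herm_std_add2: "herm_std z (u + v) = herm_std z u + herm_std z v"
  by (simp add: herm_std_def algebra_simps)

context
  fixes w :: cvec assumes kpos: "kp w > 0"
begin

lemma herm_x_uu: "herm x (uu w t) = herm x (e1 w) + cnj (cis t) * herm x (e2 w)"
  unfolding uu_def herm_add2 herm_smult2 ..

lemma norm_uu_sq: "(norm (uu w t))^2 = (norm (e1 w))^2 + 1 + 2 * Re (cnj (herm_std (e1 w) (e2 w)) * cis t)"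
proof -
  define s where "s = herm_std (e1 w) (e2 w)"
  have "complex_of_real ((norm (uu w t))^2) = herm_std (e1 w) (e1 w) + cis t * cnj (cis t) * herm_std (e2 w) (e2 w)
        + (cnj (cis t) * s + cis t * cnj s)"
    unfolding normsq_std uu_def herm_std_add1 herm_std_add2 herm_std_smult1 herm_std_smult2 s_def
    by (simp add: herm_std_cnj[of "e2 w" "e1 w"] algebra_simps)
  also have "cnj (cis t) * s + cis t * cnj s = of_real (2 * Re (cnj s * cis t))"
  proof -
    have "cnj (cis t) * s + cis t * cnj s = (cnj s * cis t) + cnj (cnj s * cis t)" by (simp add: mult.commute)
    then show ?thesis using complex_add_cnj by metis
  qed
  also have "cis t * cnj (cis t) = 1" by (simp add: cis_cnj cis_mult)
  finally have "complex_of_real ((norm (uu w t))^2) =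
      complex_of_real ((norm (e1 w))^2 + 1 + 2 * Re (cnj s * cis t))"
    using norm_e2[OF kpos] by (simp add: normsq_std[symmetric] del: of_real_power)
  then show ?thesis unfolding s_def using of_real_eq_iff by blast
qed

lemma uu_periodic: "n \<in> \<int> \<Longrightarrow> uu w (t - 2 * n * pi) = uu w t"
proof -
  assume "n \<in> \<int>"
  then have "cis (- (2 * pi * n)) = 1" using cis_multiple_2pi[of "-n"] by simp
  then have "cis (t - 2 * n * pi) = cis t" 
    by (metis (no_types) cis_mult diff_conv_add_uminus mult.commute mult.left_commute mult_1_right)
  then show ?thesis unfolding uu_def by simp
qed

end

lemma quart_diff: fixes r d :: real assumes "0 \<le> d" "d \<le> r" "r \<le> 1"
  shows "(r + d)^4 - r^4 \<le> 15 * d"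
proof -
  have e: "(r + d)^4 - r^4 = d * (4 * r^3 + 6 * r^2 * d + 4 * r * d^2 + d^3)"
    by (simp add: power2_eq_square power3_eq_cube power4_eq_xxxx algebra_simps)
  have r0: "0 \<le> r" using assms by simp
  have d1: "d \<le> 1" using assms by simp
  have "r^3 \<le> 1" using r0 assms(3) by (simp add: power_le_one)
  moreover have "r^2 * d \<le> 1" using r0 assms d1 by (simp add: mult_le_one power_le_one)
  moreover have "r * d^2 \<le> 1" using r0 assms d1 by (simp add: mult_le_one power_le_one)
  moreover have "d^3 \<le> 1" using assms d1 by (simp add: power_le_one)
  ultimately have "4 * r^3 + 6 * r^2 * d + 4 * r * d^2 + d^3 \<le> 15" by linarith
  then have "d * (4 * r^3 + 6 * r^2 * d + 4 * r * d^2 + d^3) \<le> d * 15" by (rule mult_left_mono[OF _ assms(1)])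
  then show ?thesis unfolding e by (simp add: mult.commute)
qed

lemma ann_sq:
  fixes r R nx N H :: real
  assumes "0 < r" "0 < nx" "0 < N" "0 \<le> H" "r \<le> sqrt (H / (nx * N))" "sqrt (H / (nx * N)) \<le> R"
  shows "r^4 * nx^2 * N^2 \<le> H^2" "H^2 \<le> R^4 * nx^2 * N^2" "H \<le> R^2 * (nx * N)"
proof -
  have p: "0 < nx * N" using assms by simp
  have v0: "0 \<le> H / (nx * N)" using p assms(4) by simp
  have "r^2 \<le> (sqrt (H / (nx * N)))^2" using assms(1,5) by (intro power_mono) auto
  then have "r^2 \<le> H / (nx * N)" using v0 by simp
  then have l: "r^2 * (nx * N) \<le> H" using p by (simp add: pos_le_divide_eq)
  have "(sqrt (H / (nx * N)))^2 \<le> R^2" using assms(6) v0 by (intro power_mono) auto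
  then have "H / (nx * N) \<le> R^2" using v0 by simp
  then show u: "H \<le> R^2 * (nx * N)" using p by (simp add: pos_divide_le_eq)
  have "(r^2 * (nx * N))^2 \<le> H^2" using l p assms(1) by (intro power_mono) auto
  then show "r^4 * nx^2 * N^2 \<le> H^2" by (simp add: power_mult_distrib power2_eq_square power4_eq_xxxx mult_ac)
  have "H^2 \<le> (R^2 * (nx * N))^2" using u assms(4) by (intro power_mono) auto
  then show "H^2 \<le> R^4 * nx^2 * N^2" by (simp add: power_mult_distrib power2_eq_square power4_eq_xxxx mult_ac)
qed

lemma re_cis_arg: "Re (Z * cis t) = cmod Z * cos (t + Arg Z)"
proof (cases "Z = 0")
  case True then show ?thesis by simp
next
  case False
  have "Z = of_real (cmod Z) * cis (Arg Z)" using cis_Arg[OF False] False by (simp add: sgn_div_norm scaleR_conv_of_real)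
  then have "Z * cis t = of_real (cmod Z) * cis (t + Arg Z)" by (metis cis_mult mult.assoc add.commute)
  then show ?thesis by simp
qed


lemma main_L:
  fixes w :: cvec and X :: "cvec set"
  assumes kpos: "kp w > 0" and Em: "(norm w)^2 / kp w \<le> Em"
    and X: "X \<in> S3" and dpos: "0 < \<delta>" and dr: "\<delta> \<le> r" and r0: "r \<le> 1 / (7 * Em)"
  shows "hausdorff_meas dvis 2 (annulus X r \<delta> \<inter> {P \<in> S3. herm (rep P) w = 0}) \<le> ennreal (800 * Em^2 * sqrt \<delta>)"
proof -
  define E where "E = (norm w)^2 / kp w"
  define ne where "ne = norm (e1 w)"
  have neE: "ne^2 = E" using norm_e1[OF kpos] unfolding ne_def E_def .
  have kle: "kp w \<le> (norm w)^2" unfolding kp_def sw_def normsq by simp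
  have E1: "1 \<le> E" using kle kpos unfolding E_def by simp
  have EEm: "E \<le> Em" using Em unfolding E_def .
  have Em1: "1 \<le> Em" using E1 EEm by simp
  have ne0: "0 \<le> ne" unfolding ne_def by simp
  have ne_sqrt: "ne = sqrt E" using neE ne0 by (metis real_sqrt_unique)
  have ne1: "1 \<le> ne" unfolding ne_sqrt using E1 by simp
  have "ne * 1 \<le> ne * ne" using ne1 ne0 by (rule mult_left_mono)
  then have neleE: "ne \<le> E" using neE by (simp add: power2_eq_square)
  have neEm: "ne \<le> Em" using neleE EEm by simp
  define \<gamma> where "\<gamma> t = line (uu w t)" for t
  have hol: "(dvis (\<gamma> s) (\<gamma> t))^2 \<le> E * \<bar>s - t\<bar>" for s t
    unfolding \<gamma>_def dvis_line2[OF uu_nz[OF kpos] uu_nz[OF kpos]] E_def norm_e1[OF kpos, symmetric]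
    by (rule holder[OF kpos])
  define A where "A = annulus X r \<delta> \<inter> {P \<in> S3. herm (rep P) w = 0}"
  have XP: "X \<in> ProjPlane" using X unfolding S3_def by auto
  define x where "x = rep X"
  have xnz: "x \<noteq> 0" using rep_props(2)[OF XP] unfolding x_def .
  have hxx: "herm x x = 0" using X unfolding S3_def qform_def x_def by auto
  define nx where "nx = norm x"
  have nxp: "nx > 0" using xnz unfolding nx_def by simp
  define p where "p = herm x (e1 w)"
  define q where "q = herm x (e2 w)"
  define a where "a = herm x (wn w)"
  have "complex_of_real ((cmod p)^2 - (cmod q)^2 - (cmod a)^2) = 0"
    using parseval[OF kpos, of x] hxx unfolding p_def q_def a_def
    by (simp add: cmod_sq_c del: of_real_power)
  then have "(cmod p)^2 - (cmod q)^2 - (cmod a)^2 = 0" using of_real_eq_0_iff by blast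
  then have pars: "(cmod p)^2 = (cmod q)^2 + (cmod a)^2" by simp
  have "(cmod q)^2 \<le> (cmod p)^2" using pars by simp
  then have qp: "cmod q \<le> cmod p" by (rule power2_le_imp_le) simp
  have "(cmod a)^2 \<le> (cmod p)^2" using pars by simp
  then have ap: "cmod a \<le> cmod p" by (rule power2_le_imp_le) simp
  have nwn: "norm (wn w) = ne"
  proof -
    have "(norm (wn w))^2 = ne^2" using norm_wn[OF kpos] neE unfolding E_def by simp
    then show ?thesis using ne0 by (simp add: power2_eq_iff_nonneg)
  qed
  have nxb: "nx \<le> 3 * ne * cmod p"
  proof -
    have "nx = norm (p *s e1 w - q *s e2 w - a *s wn w)"
      using decomp_n[OF kpos, of x] unfolding nx_def p_def q_def a_def by simp
    also have "\<dots> \<le> norm (p *s e1 w) + norm (q *s e2 w) + norm (a *s wn w)"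
      using norm_triangle_ineq4[of "p *s e1 w - q *s e2 w" "a *s wn w"] norm_triangle_ineq4[of "p *s e1 w" "q *s e2 w"]
      by linarith
    also have "\<dots> = cmod p * ne + cmod q + cmod a * ne"
      unfolding norm_smult norm_e2[OF kpos] nwn ne_def by simp
    also have "\<dots> \<le> cmod p * ne + cmod p * ne + cmod p * ne"
    proof -
      have "cmod p * 1 \<le> cmod p * ne" using ne1 by (intro mult_left_mono) auto
      moreover have "cmod a * ne \<le> cmod p * ne" using ap ne0 by (rule mult_right_mono)
      ultimately show ?thesis using qp by linarith
    qed
    finally show ?thesis by simp
  qed
  have dist: "dvis X (\<gamma> t) = sqrt (cmod (p + cnj (cis t) * q) / (nx * norm (uu w t)))" for t
    unfolding \<gamma>_def dvis_line[OF XP uu_nz[OF kpos]] dv_def herm_x_uu[OF kpos] p_def q_def nx_def x_def ..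
  have memA: "\<exists>t. P = \<gamma> t \<and> r \<le> dvis X (\<gamma> t) \<and> dvis X (\<gamma> t) \<le> r + \<delta>" if "P \<in> A" for P
  proof -
    have "P \<in> S3" "herm (rep P) w = 0" "r \<le> dvis X P" "dvis X P \<le> r + \<delta>"
      using that unfolding A_def annulus_def by auto
    then obtain t where "P = line (uu w t)" using chain_param[OF kpos] by blast
    then show ?thesis using \<open>r \<le> dvis X P\<close> \<open>dvis X P \<le> r + \<delta>\<close> unfolding \<gamma>_def by auto
  qed
  have rp: "0 < r" using dpos dr by simp
  have annsq: "r^4 * nx^2 * (norm (uu w t))^2 \<le> (cmod (p + cnj (cis t) * q))^2
     \<and> (cmod (p + cnj (cis t) * q))^2 \<le> (r + \<delta>)^4 * nx^2 * (norm (uu w t))^2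
     \<and> cmod (p + cnj (cis t) * q) \<le> (r + \<delta>)^2 * (nx * norm (uu w t))"
    if "r \<le> dvis X (\<gamma> t)" "dvis X (\<gamma> t) \<le> r + \<delta>" for t
    using ann_sq[OF rp nxp _ _ that[unfolded dist]] uu_nz[OF kpos] by simp
  show ?thesis
  proof (cases "A = {}")
    case True
    have "hausdorff_meas dvis 2 A \<le> ennreal (2 * E * ((0 - 0) + (0 - 0)))"
      by (rule haus_bound[where \<gamma>=\<gamma> and d=dvis and M=E]) (use hol E1 True in auto)
    also have "\<dots> \<le> ennreal (800 * Em^2 * sqrt \<delta>)" using dpos by (intro ennreal_leI) auto
    finally show ?thesis unfolding A_def .
  next
    case False
    then obtain P0 where "P0 \<in> A" by auto
    then obtain t0 where t0: "r \<le> dvis X (\<gamma> t0)" "dvis X (\<gamma> t0) \<le> r + \<delta>" using memA by blast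
    define N0 where "N0 = norm (uu w t0)"
    have N0ub: "N0 \<le> 2 * ne" using norm_uu_ub[OF kpos, of t0] ne1 unfolding N0_def ne_def by simp
    have N0nn: "0 \<le> N0" unfolding N0_def by simp
    have H0: "cmod (p + cnj (cis t0) * q) \<le> (r + \<delta>)^2 * (nx * N0)" using annsq[OF t0] N0_def by simp
    have r0': "0 \<le> r" using rp by simp
    have rd2: "(r + \<delta>)^2 \<le> 4 * r^2"
    proof -
      have "(r + \<delta>)^2 \<le> (2 * r)^2" using dr dpos by (intro power_mono) auto
      then show ?thesis by (simp add: power_mult_distrib)
    qed
    have r2: "r^2 \<le> 1 / (49 * Em^2)"
    proof -
      have "r^2 \<le> (1 / (7 * Em))^2" using r0 r0' by (intro power_mono) auto
      then show ?thesis by (simp add: power_divide power_mult_distrib)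
    qed
    have H0b: "cmod (p + cnj (cis t0) * q) \<le> 8 * r^2 * nx * ne"
    proof -
      have "(r + \<delta>)^2 * (nx * N0) \<le> (4 * r^2) * (nx * (2 * ne))"
        using rd2 N0ub nxp N0nn by (intro mult_mono) auto
      then show ?thesis using H0 by simp
    qed
    have tri: "cmod p - cmod q \<le> cmod (p + cnj (cis t0) * q)"
      using norm_diff_ineq[of p "cnj (cis t0) * q"] by (simp add: norm_mult)
    have a1: "8 * r^2 * nx * ne \<le> 8 * nx * ne / (49 * Em^2)"
    proof -
      have "(8 * nx * ne) * r^2 \<le> (8 * nx * ne) * (1 / (49 * Em^2))"
        using r2 nxp ne0 by (intro mult_left_mono) auto
      then show ?thesis by (simp add: mult_ac)
    qed
    have Em2: "Em \<le> Em^2" using Em1 by (simp add: power2_eq_square)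
    have a2: "8 * nx * ne / (49 * Em^2) \<le> nx / (6 * ne)"
    proof -
      have "0 \<le> Em^2" by simp
      then have "48 * ne^2 \<le> 49 * Em^2" using neE EEm Em2 by linarith
      then have "nx * (48 * ne^2) \<le> nx * (49 * Em^2)" using nxp by (intro mult_left_mono) auto
      then have "8 * nx * ne * (6 * ne) \<le> nx * (49 * Em^2)" by (simp add: power2_eq_square mult_ac)
      moreover have "0 < 49 * Em^2" "0 < 6 * ne" using Em1 ne1 by auto
      ultimately show ?thesis by (simp add: divide_simps)
    qed
    have a3: "nx / (6 * ne) \<le> cmod p / 2"
      using nxb ne1 by (simp add: divide_simps mult_ac)
    have qhalf: "cmod p / 2 \<le> cmod q" using tri H0b a1 a2 a3 by linarith
    have plb: "nx / (3 * ne) \<le> cmod p" using nxb ne1 by (simp add: divide_simps mult_ac)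
    have pq: "nx^2 / (18 * Em) \<le> cmod p * cmod q"
    proof -
      have "(nx / (3 * ne))^2 \<le> (cmod p)^2" using plb nxp ne1 by (intro power_mono) auto
      then have "nx^2 / (9 * E) \<le> (cmod p)^2" using neE by (simp add: power_divide power_mult_distrib)
      moreover have "nx^2 / (9 * Em) \<le> nx^2 / (9 * E)" using EEm E1 by (intro divide_left_mono) auto
      moreover have "cmod p * (cmod p / 2) \<le> cmod p * cmod q" using qhalf by (intro mult_left_mono) auto
      moreover have "nx^2 / (18 * Em) = (nx^2 / (9 * Em)) / 2" by simp
      moreover have "(cmod p)^2 / 2 = cmod p * (cmod p / 2)" by (simp add: power2_eq_square)
      ultimately show ?thesis by linarith
    qed
    define \<sigma> where "\<sigma> = cnj (herm_std (e1 w) (e2 w))"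
    have sig: "cmod \<sigma> \<le> ne" unfolding \<sigma>_def ne_def using cs_std[of "e1 w" "e2 w"] norm_e2[OF kpos] by simp
    define s1 where "s1 = r^4 * nx^2"
    define s2 where "s2 = (r + \<delta>)^4 * nx^2"
    have s1nn: "0 \<le> s1" unfolding s1_def by simp
    have s1sig: "s1 * cmod \<sigma> \<le> nx^2 / (36 * Em)"
    proof -
      have "(r^2)^2 \<le> (1 / (49 * Em^2))^2" using r2 by (intro power_mono) auto
      then have r4: "r^4 \<le> 1 / (2401 * Em^4)" by (simp add: power_divide power_mult_distrib flip: power_mult)
      have "r^4 * cmod \<sigma> \<le> (1 / (2401 * Em^4)) * Em" using r4 sig neEm by (intro mult_mono) auto
      also have "\<dots> = 1 / (2401 * Em^3)" using Em1 by (simp add: power_def field_simps)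
      also have "\<dots> \<le> 1 / (36 * Em)"
      proof -
        have "Em * 1 \<le> Em * Em^2" using Em1 Em2 by (intro mult_left_mono) auto
        moreover have "Em^3 = Em * Em^2" by (simp add: power3_eq_cube power2_eq_square)
        ultimately have "Em \<le> Em^3" by simp
        then have "36 * Em \<le> 2401 * Em^3" using Em1 by linarith
        then show ?thesis using Em1 by (intro divide_left_mono) auto
      qed
      finally have "r^4 * cmod \<sigma> \<le> 1 / (36 * Em)" .
      then have "nx^2 * (r^4 * cmod \<sigma>) \<le> nx^2 * (1 / (36 * Em))" by (intro mult_left_mono) auto
      then show ?thesis unfolding s1_def by (simp add: mult_ac)
    qed
    define Z where "Z = p * cnj q - of_real s1 * \<sigma>"
    have Zb: "nx^2 / (36 * Em) \<le> cmod Z"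
    proof -
      have "cmod (p * cnj q) - cmod (of_real s1 * \<sigma>) \<le> cmod Z" unfolding Z_def by (rule norm_triangle_ineq2)
      moreover have "cmod (p * cnj q) = cmod p * cmod q" by (simp add: norm_mult)
      moreover have "cmod (of_real s1 * \<sigma>) = s1 * cmod \<sigma>" using s1nn by (simp add: norm_mult)
      moreover have "nx^2 / (18 * Em) - nx^2 / (36 * Em) = nx^2 / (36 * Em)" by (simp add: field_simps)
      ultimately show ?thesis using pq s1sig by linarith
    qed
    have Zpos: "0 < cmod Z" using Zb nxp Em1 by (smt (verit) divide_pos_pos zero_less_power)
    define A0 where "A0 = (cmod p)^2 + (cmod q)^2 - s1 * (E + 1)"
    have expand: "(cmod (p + cnj (cis t) * q))^2 - s1 * (norm (uu w t))^2 = A0 + 2 * (cmod Z * cos (t + Arg Z))" for t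
    proof -
      have e1: "(cmod (p + cnj (cis t) * q))^2 = (cmod p)^2 + (cmod q)^2 + 2 * Re (p * cnj q * cis t)"
        using cmod_sq_expand[of p "cnj (cis t)" q] by simp
      have e2: "(norm (uu w t))^2 = E + 1 + 2 * Re (\<sigma> * cis t)"
        using norm_uu_sq[OF kpos, of t] neE unfolding \<sigma>_def ne_def by simp
      have e3: "Re (Z * cis t) = Re (p * cnj q * cis t) - s1 * Re (\<sigma> * cis t)"
        unfolding Z_def by (simp add: algebra_simps)
      show ?thesis unfolding e1 e2 A0_def re_cis_arg[symmetric] e3 by (simp add: algebra_simps)
    qed
    define ch where "ch = - Arg Z"
    define c1 where "c1 = - A0 / (2 * cmod Z)"
    define c2 where "c2 = c1 + (s2 - s1) * (ne + 1)^2 / (2 * cmod Z)"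
    have s12: "s1 \<le> s2" unfolding s1_def s2_def using dpos r0' by (intro mult_right_mono power_mono) auto
    have cosb: "c1 \<le> cos (t - ch) \<and> cos (t - ch) \<le> c2"
      if tt: "r \<le> dvis X (\<gamma> t)" "dvis X (\<gamma> t) \<le> r + \<delta>" for t
    proof -
      define N where "N = norm (uu w t)"
      define H where "H = cmod (p + cnj (cis t) * q)"
      have hs: "s1 * N^2 \<le> H^2" "H^2 \<le> s2 * N^2" using annsq[OF tt] unfolding N_def H_def s1_def s2_def
        by (simp_all add: mult_ac)
      have ex: "H^2 - s1 * N^2 = A0 + 2 * (cmod Z * cos (t - ch))"
        using expand[of t] unfolding H_def N_def ch_def by simp
      have Nub: "N \<le> ne + 1" using norm_uu_ub[OF kpos, of t] unfolding N_def ne_def .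
      have "N^2 \<le> (ne + 1)^2" using Nub by (intro power_mono) (auto simp: N_def)
      then have "(s2 - s1) * N^2 \<le> (s2 - s1) * (ne + 1)^2" using s12 by (intro mult_left_mono) auto
      then have up: "A0 + 2 * (cmod Z * cos (t - ch)) \<le> (s2 - s1) * (ne + 1)^2"
        using hs ex by (simp add: algebra_simps)
      have lo: "0 \<le> A0 + 2 * (cmod Z * cos (t - ch))" using hs ex by simp
      show ?thesis
      proof
        show "c1 \<le> cos (t - ch)" unfolding c1_def using lo Zpos by (simp add: divide_simps algebra_simps)
        show "cos (t - ch) \<le> c2" unfolding c2_def c1_def using up Zpos by (simp add: divide_simps algebra_simps)
      qed
    qed
    define \<alpha>0 where "\<alpha>0 = arccos (min 1 c2)"
    define \<beta>0 where "\<beta>0 = arccos (max (-1) c1)"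
    have wid: "\<beta>0 - \<alpha>0 \<le> 6 * sqrt (c2 - c1)"
      using cos_interval(2)[of c1 "t0 - ch" c2] cosb[OF t0] unfolding \<alpha>0_def \<beta>0_def by blast
    have ab: "\<alpha>0 \<le> \<beta>0"
      using cos_interval(1)[of c1 "t0 - ch" c2] cosb[OF t0] unfolding \<alpha>0_def \<beta>0_def by auto
    have cover: "A \<subseteq> \<gamma> ` {ch + \<alpha>0 .. ch + \<beta>0} \<union> \<gamma> ` {ch - \<beta>0 .. ch - \<alpha>0}"
    proof
      fix P assume "P \<in> A"
      then obtain t where t: "P = \<gamma> t" "r \<le> dvis X (\<gamma> t)" "dvis X (\<gamma> t) \<le> r + \<delta>" using memA by blast
      obtain n where n: "n \<in> \<int>" "t - ch - 2 * n * pi \<in> {\<alpha>0..\<beta>0} \<or> t - ch - 2 * n * pi \<in> {-\<beta>0..-\<alpha>0}"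
        using cos_interval(1)[of c1 "t - ch" c2] cosb[OF t(2,3)] unfolding \<alpha>0_def \<beta>0_def by blast
      have "\<gamma> (t - 2 * n * pi) = P" unfolding t(1) \<gamma>_def using uu_periodic[OF kpos n(1)] by simp
      moreover have "t - 2 * n * pi \<in> {ch + \<alpha>0 .. ch + \<beta>0} \<or> t - 2 * n * pi \<in> {ch - \<beta>0 .. ch - \<alpha>0}"
        using n(2) by auto
      ultimately show "P \<in> \<gamma> ` {ch + \<alpha>0 .. ch + \<beta>0} \<union> \<gamma> ` {ch - \<beta>0 .. ch - \<alpha>0}" by force
    qed
    have hb: "hausdorff_meas dvis 2 A \<le> ennreal (2 * E * (((ch + \<beta>0) - (ch + \<alpha>0)) + ((ch - \<alpha>0) - (ch - \<beta>0))))"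
      by (rule haus_bound[where \<gamma>=\<gamma> and d=dvis and M=E]) (use hol E1 ab cover in auto)
    have r1: "r \<le> 1"
    proof -
      have "1 / (7 * Em) \<le> 1" using Em1 by simp
      then show ?thesis using r0 by simp
    qed
    have cw: "c2 - c1 \<le> 1080 * Em^2 * \<delta>"
    proof -
      have "s2 - s1 = nx^2 * ((r + \<delta>)^4 - r^4)" unfolding s1_def s2_def by (simp add: algebra_simps)
      also have "\<dots> \<le> nx^2 * (15 * \<delta>)" using quart_diff[of \<delta> r] dpos dr r1 by (intro mult_left_mono) auto
      finally have s21: "s2 - s1 \<le> 15 * \<delta> * nx^2" by (simp add: mult_ac)
      have "(ne + 1)^2 \<le> (2 * ne)^2" using ne1 by (intro power_mono) auto
      then have ne4: "(ne + 1)^2 \<le> 4 * Em" using neE EEm by (simp add: power_mult_distrib)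
      have num: "(s2 - s1) * (ne + 1)^2 \<le> (15 * \<delta> * nx^2) * (4 * Em)"
        using s21 ne4 s12 by (intro mult_mono) auto
      have den: "nx^2 / (18 * Em) \<le> 2 * cmod Z" using Zb by (simp add: field_simps)
      have dpos': "0 < nx^2 / (18 * Em)" using nxp Em1 by simp
      have "c2 - c1 = (s2 - s1) * (ne + 1)^2 / (2 * cmod Z)" unfolding c2_def by simp
      also have "\<dots> \<le> (15 * \<delta> * nx^2) * (4 * Em) / (2 * cmod Z)"
        using num Zpos by (intro divide_right_mono) auto
      also have "\<dots> \<le> (15 * \<delta> * nx^2) * (4 * Em) / (nx^2 / (18 * Em))"
        using den dpos' dpos Em1 Zpos nxp by (intro divide_left_mono) auto
      also have "\<dots> = 1080 * Em^2 * \<delta>" using nxp Em1 by (simp add: field_simps power2_eq_square)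
      finally show ?thesis .
    qed
    have bw: "\<beta>0 - \<alpha>0 \<le> 200 * Em * sqrt \<delta>"
    proof -
      have "sqrt (c2 - c1) \<le> sqrt (1080 * Em^2 * \<delta>)" using cw by simp
      also have "\<dots> = sqrt 1080 * Em * sqrt \<delta>" using Em1 by (simp add: real_sqrt_mult)
      finally have "6 * sqrt (c2 - c1) \<le> 6 * sqrt 1080 * Em * sqrt \<delta>" by simp
      moreover have "6 * sqrt 1080 \<le> (200::real)"
      proof -
        have "sqrt 1080 \<le> (100 / 3 :: real)" by (rule real_le_lsqrt) (auto simp: power2_eq_square)
        then show ?thesis by simp
      qed
      then have "6 * sqrt 1080 * (Em * sqrt \<delta>) \<le> 200 * (Em * sqrt \<delta>)" using Em1 dpos by (intro mult_right_mono) auto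
      ultimately show ?thesis using wid by (simp add: mult_ac)
    qed
    have "2 * E * (((ch + \<beta>0) - (ch + \<alpha>0)) + ((ch - \<alpha>0) - (ch - \<beta>0))) = 4 * E * (\<beta>0 - \<alpha>0)" by simp
    also have "\<dots> \<le> 4 * Em * (200 * Em * sqrt \<delta>)" using EEm bw E1 ab by (intro mult_mono) auto
    also have "\<dots> = 800 * Em^2 * sqrt \<delta>" by (simp add: power2_eq_square)
    finally have "hausdorff_meas dvis 2 A \<le> ennreal (800 * Em^2 * sqrt \<delta>)"
      using hb by (meson ennreal_leI order_trans)
    then show ?thesis unfolding A_def .
  qed
qed


lemma kp_herm: "kp u = - Re (herm u u)"
  using kp_q[of u] unfolding qform_def .

lemma kp_smult: "kp (c *s u) = (cmod c)^2 * kp u"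
proof -
  have "herm (c *s u) (c *s u) = (c * cnj c) * herm u u"
    by (simp add: herm_smult1 herm_smult2 mult_ac)
  then have "herm (c *s u) (c *s u) = of_real ((cmod c)^2) * herm u u" by (simp only: cmod_sq_c)
  then show ?thesis unfolding kp_herm by simp
qed

lemma kp_lip: "\<bar>kp u - kp v\<bar> \<le> norm (u - v) * (norm u + norm v)"
proof -
  have "herm u u - herm v v = herm (u - v) u + herm v (u - v)"
    by (simp add: herm_diff1 herm_diff2)
  moreover have "kp u - kp v = - Re (herm u u - herm v v)" unfolding kp_herm by simp
  ultimately have "\<bar>kp u - kp v\<bar> = \<bar>Re (herm (u - v) u + herm v (u - v))\<bar>" by simp
  also have "\<dots> \<le> cmod (herm (u - v) u + herm v (u - v))" by (rule abs_Re_le_cmod)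
  also have "\<dots> \<le> cmod (herm (u - v) u) + cmod (herm v (u - v))" by (rule norm_triangle_ineq)
  also have "\<dots> \<le> norm (u - v) * norm u + norm v * norm (u - v)"
    using cs_herm[of "u - v" u] cs_herm[of v "u - v"] by linarith
  finally show ?thesis by (simp add: algebra_simps)
qed

lemma norm_diff_sq: "(norm (a - b))^2 = (norm a)^2 + (norm b)^2 - 2 * Re (herm_std a b)"
  unfolding inner_herm_std[symmetric] by (simp add: power2_norm_eq_inner inner_diff algebra_simps inner_commute)

definition kap :: "cvec set \<Rightarrow> real" where "kap P = kp (rep P) / (norm (rep P))^2"

lemma kap_lip:
  assumes "P \<in> ProjPlane" "Q \<in> ProjPlane"
  shows "\<bar>kap P - kap Q\<bar> \<le> 3 * dE P Q"
proof -
  define u where "u = rep P"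
  define v where "v = rep Q"
  have unz: "u \<noteq> 0" "v \<noteq> 0" using rep_props assms unfolding u_def v_def by auto
  define nu where "nu = norm u"
  define nv where "nv = norm v"
  have nup: "nu > 0" "nv > 0" using unz unfolding nu_def nv_def by auto
  define z where "z = herm_std u v"
  define l where "l = (if z = 0 then 1 else sgn z)"
  have l1: "cmod l = 1" unfolding l_def by (simp add: norm_sgn)
  have lz: "cnj l * z = of_real (cmod z)"
  proof (cases "z = 0")
    case True then show ?thesis unfolding l_def by simp
  next
    case False
    have "cnj l * z = (cnj z * z) / of_real (cmod z)" unfolding l_def using False by (simp add: sgn_eq)
    also have "cnj z * z = of_real ((cmod z)^2)" unfolding cmod_sq_c by (simp add: mult.commute)
    also have "of_real ((cmod z)^2) / of_real (cmod z) = (of_real (cmod z) :: complex)"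
      using False by (simp add: power2_eq_square)
    finally show ?thesis .
  qed
  define u' where "u' = of_real (1 / nu) *s u"
  define v' where "v' = (l / of_real nv) *s v"
  have nu': "norm u' = 1" unfolding u'_def norm_smult norm_of_real using nup nu_def by simp
  have nv': "norm v' = 1" unfolding v'_def norm_smult nv_def using nup nv_def l1 by (simp add: norm_divide)
  have kP: "kap P = kp u'" unfolding kap_def u'_def kp_smult u_def[symmetric] nu_def norm_of_real
    by (simp add: power_divide)
  have kQ: "kap Q = kp v'" unfolding kap_def v'_def kp_smult v_def[symmetric] nv_def
    using l1 by (simp add: power_divide norm_divide)
  define t where "t = cmod z / (nu * nv)"
  have t0: "0 \<le> t" unfolding t_def using nup by simp
  have t1: "t \<le> 1" unfolding t_def z_def nu_def nv_def using cs_std[of u v] nup nu_def nv_def by simp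
  have huv: "herm_std u' v' = of_real t"
  proof -
    have "herm_std u' v' = of_real (1 / nu) * (cnj l / of_real nv) * z"
      unfolding u'_def v'_def herm_std_smult1 herm_std_smult2 z_def by simp
    also have "\<dots> = of_real (1 / (nu * nv)) * (cnj l * z)" by (simp add: field_simps)
    also have "\<dots> = of_real t" unfolding lz t_def by simp
    finally show ?thesis .
  qed
  have d2: "(norm (u' - v'))^2 = 2 - 2 * t" unfolding norm_diff_sq nu' nv' huv by simp
  have "(cmod z)^2 \<le> (nu * nv)^2" using cs_std[of u v] unfolding z_def nu_def nv_def
      by (intro power_mono) auto
    then have cs: "(cmod z)^2 \<le> nu^2 * nv^2" by (simp add: power_mult_distrib)
  have dEf: "dE P Q = sqrt (nu^2 * nv^2 - (cmod z)^2) / (nu * nv)"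
      unfolding dE_def wedge_norm_def u_def[symmetric] v_def[symmetric] nu_def nv_def z_def ..
  have dE2: "(dE P Q)^2 = 1 - t^2"
  proof -
    from dEf have "(dE P Q)^2 = (nu^2 * nv^2 - (cmod z)^2) / (nu * nv)^2"
      using cs by (simp add: power_divide)
    also have "\<dots> = 1 - t^2" unfolding t_def using nup by (simp add: field_simps power2_eq_square)
    finally show ?thesis .
  qed
  have dE0: "0 \<le> dE P Q" unfolding dEf using cs nup by simp
  have "(norm (u' - v'))^2 \<le> (sqrt 2 * dE P Q)^2"
  proof -
    have "t * t \<le> t * 1" using t0 t1 by (rule mult_left_mono[rotated])
    then have "t^2 \<le> t" by (simp add: power2_eq_square)
    then show ?thesis unfolding d2 power_mult_distrib dE2 by simp
  qed
  then have nd: "norm (u' - v') \<le> sqrt 2 * dE P Q" by (rule power2_le_imp_le) (use dE0 in simp)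
  have "\<bar>kap P - kap Q\<bar> \<le> norm (u' - v') * 2" unfolding kP kQ using kp_lip[of u' v'] nu' nv' by simp
  also have "\<dots> \<le> sqrt 2 * dE P Q * 2" using nd by simp
  also have "\<dots> \<le> 3 * dE P Q"
  proof -
    have "sqrt 2 \<le> (3/2::real)" by (rule real_le_lsqrt) (auto simp: power2_eq_square)
    then have "sqrt 2 * 2 \<le> (3::real)" by simp
    then have "(sqrt 2 * 2) * dE P Q \<le> 3 * dE P Q" by (rule mult_right_mono[OF _ dE0])
    then show ?thesis by (simp add: mult_ac)
  qed
  finally show ?thesis .
qed


definition Pm :: "cvec \<Rightarrow> complex^3^3" where "Pm a = (\<chi> i j. a$i * cnj (a$j))"

lemma normsq33: "(norm (M::complex^3^3))^2 = (norm (M$0))^2 + (norm (M$1))^2 + (norm (M$2))^2"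
  by (simp add: norm_vec_def L2_set_def sum3)

lemma hs_c: "complex_of_real ((norm (Pm a - Pm b))^2) =
   (herm_std a a)^2 + (herm_std b b)^2 - 2 * (herm_std a b * cnj (herm_std a b))"
  unfolding normsq33 normsq of_real_add cmod_sq_c
  by (simp add: Pm_def herm_std_def algebra_simps power2_eq_square)


lemma hs: "(norm (Pm a - Pm b))^2 = (norm a)^4 + (norm b)^4 - 2 * (cmod (herm_std a b))^2"
proof -
  have "complex_of_real ((norm (Pm a - Pm b))^2) =
     complex_of_real ((norm a)^4 + (norm b)^4 - 2 * (cmod (herm_std a b))^2)"
    unfolding hs_c herm_std_self by (simp add: cmod_sq_c del: of_real_power flip: of_real_power) 
  then show ?thesis using of_real_eq_iff by blast
qed

definition nvec :: "cvec set \<Rightarrow> cvec" where "nvec P = of_real (1 / norm (rep P)) *s rep P"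

lemma wedge_nonneg: "(cmod (herm_std u v))^2 \<le> (norm u)^2 * (norm v)^2"
proof -
  have "(cmod (herm_std u v))^2 \<le> (norm u * norm v)^2" using cs_std[of u v] by (intro power_mono) auto
  then show ?thesis by (simp add: power_mult_distrib)
qed

lemma dE_nonneg: "0 \<le> dE P Q"
  unfolding dE_def wedge_norm_def using wedge_nonneg by simp

lemma dE_commute: "dE P Q = dE Q P"
  unfolding dE_def wedge_norm_def using herm_std_cnj[of "rep P" "rep Q"] by (simp add: mult.commute)

lemma dE_hs:
  assumes "P \<in> ProjPlane" "Q \<in> ProjPlane"
  shows "dE P Q = norm (Pm (nvec P) - Pm (nvec Q)) / sqrt 2"
proof -
  define u where "u = rep P"
  define v where "v = rep Q"
  have unz: "u \<noteq> 0" "v \<noteq> 0" using rep_props assms unfolding u_def v_def by auto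
  define nu where "nu = norm u"
  define nv where "nv = norm v"
  have nup: "nu > 0" "nv > 0" using unz unfolding nu_def nv_def by auto
  define z where "z = herm_std u v"
  have na: "norm (nvec P) = 1" unfolding nvec_def norm_smult norm_of_real u_def[symmetric] using unz by simp
  have nb: "norm (nvec Q) = 1" unfolding nvec_def norm_smult norm_of_real v_def[symmetric] using unz by simp
  have hab: "herm_std (nvec P) (nvec Q) = of_real (1 / (nu * nv)) * z"
    unfolding nvec_def herm_std_smult1 herm_std_smult2 u_def[symmetric] v_def[symmetric] z_def nu_def nv_def
    by simp
  define t where "t = cmod z / (nu * nv)"
  have ct: "cmod (herm_std (nvec P) (nvec Q)) = t" unfolding hab t_def using nup by (simp add: norm_mult norm_divide)
  have h2: "(norm (Pm (nvec P) - Pm (nvec Q)))^2 = 2 - 2 * t^2" unfolding hs na nb ct by simp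
  have cs: "(cmod z)^2 \<le> nu^2 * nv^2" unfolding z_def nu_def nv_def by (rule wedge_nonneg)
  have dEf: "dE P Q = sqrt (nu^2 * nv^2 - (cmod z)^2) / (nu * nv)"
    unfolding dE_def wedge_norm_def u_def[symmetric] v_def[symmetric] nu_def nv_def z_def ..
  have "(dE P Q)^2 = (nu^2 * nv^2 - (cmod z)^2) / (nu * nv)^2" unfolding dEf using cs by (simp add: power_divide)
  also have "\<dots> = 1 - t^2" unfolding t_def using nup by (simp add: field_simps power2_eq_square)
  finally have d2: "(dE P Q)^2 = 1 - t^2" .
  have "(norm (Pm (nvec P) - Pm (nvec Q)) / sqrt 2)^2 = 1 - t^2" unfolding power_divide h2 by simp
  then have "(dE P Q)^2 = (norm (Pm (nvec P) - Pm (nvec Q)) / sqrt 2)^2" using d2 by simp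
  then show ?thesis using dE_nonneg by (simp add: power2_eq_iff_nonneg)
qed

lemma Pm_eq_parallel:
  assumes "Pm a = Pm b" "norm b = 1"
  shows "b = cnj (herm_std a b) *s a"
proof -
  have bb: "b$0 * cnj (b$0) + b$1 * cnj (b$1) + b$2 * cnj (b$2) = 1"
    using herm_std_self[of b] assms(2) unfolding herm_std_def by simp
  have e: "a$i * cnj (a$j) = b$i * cnj (b$j)" for i j
    using arg_cong[OF assms(1), of "\<lambda>M. M$i$j"] unfolding Pm_def by simp
  have "b$i = cnj (herm_std a b) * a$i" for i
  proof -
    have "b$i = b$i * (b$0 * cnj (b$0) + b$1 * cnj (b$1) + b$2 * cnj (b$2))" using bb by simp
    also have "\<dots> = (b$i * cnj (b$0)) * b$0 + (b$i * cnj (b$1)) * b$1 + (b$i * cnj (b$2)) * b$2"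
      by (simp add: algebra_simps)
    also have "\<dots> = (a$i * cnj (a$0)) * b$0 + (a$i * cnj (a$1)) * b$1 + (a$i * cnj (a$2)) * b$2"
      using e by simp
    also have "\<dots> = cnj (herm_std a b) * a$i" unfolding herm_std_def by (simp add: algebra_simps)
    finally show ?thesis .
  qed
  then show ?thesis unfolding vec_eq_iff by simp
qed

lemma dE_metric: "Metric_space ProjPlane dE"
proof
  fix x y show "0 \<le> dE x y" by (rule dE_nonneg)
  show "dE x y = dE y x" by (rule dE_commute)
next
  fix x y assume xy: "x \<in> ProjPlane" "y \<in> ProjPlane"
  show "dE x y = 0 \<longleftrightarrow> x = y"
  proof
    assume "dE x y = 0"
    then have "norm (Pm (nvec x) - Pm (nvec y)) = 0" using dE_hs[OF xy] by simp
    then have "Pm (nvec x) = Pm (nvec y)" by simp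
    moreover have nb: "norm (nvec y) = 1" unfolding nvec_def norm_smult norm_of_real using rep_props(2)[OF xy(2)] by simp
    ultimately have par: "nvec y = cnj (herm_std (nvec x) (nvec y)) *s nvec x" by (rule Pm_eq_parallel)
    define c where "c = cnj (herm_std (nvec x) (nvec y))"
    have "nvec y \<noteq> 0" using nb by auto
    then have c0: "c \<noteq> 0" using par c_def by auto
    have lx: "line (nvec x) = x" unfolding nvec_def using rep_props(2)[OF xy(1)] line_smult line_rep[OF xy(1)] by simp
    have ly: "line (nvec y) = y" unfolding nvec_def using rep_props(2)[OF xy(2)] line_smult line_rep[OF xy(2)] by simp
    show "x = y" using lx ly par line_smult[OF c0] c_def by metis
  next
    assume "x = y"
    have "dE y y = 0" unfolding dE_def wedge_norm_def herm_std_self norm_of_real by simp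
    then show "dE x y = 0" using \<open>x = y\<close> by simp
  qed
next
  fix x y z assume xyz: "x \<in> ProjPlane" "y \<in> ProjPlane" "z \<in> ProjPlane"
  show "dE x z \<le> dE x y + dE y z"
    unfolding dE_hs[OF xyz(1,3)] dE_hs[OF xyz(1,2)] dE_hs[OF xyz(2,3)]
    using norm_triangle_ineq[of "Pm (nvec x) - Pm (nvec y)" "Pm (nvec y) - Pm (nvec z)"]
    by (simp add: add_divide_distrib[symmetric] divide_right_mono)
qed


lemma openin_mtop: "openin (Metric_space.mtopology ProjPlane dE) U \<longleftrightarrow>
   U \<subseteq> ProjPlane \<and> (\<forall>x. x \<in> U \<longrightarrow> (\<exists>r>0. {y. x \<in> ProjPlane \<and> y \<in> ProjPlane \<and> dE x y < r} \<subseteq> U))"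
  using Metric_space.openin_mtopology[OF dE_metric, of U] Metric_space.mball_def[OF dE_metric] by simp

lemma kap_pos: "L \<in> LC \<Longrightarrow> kap L > 0 \<and> kp (rep L) > 0"
proof -
  assume L: "L \<in> LC"
  then have LP: "L \<in> ProjPlane" unfolding LC_def by auto
  have "kp (rep L) > 0" using L unfolding LC_def kp_q by auto
  moreover have "norm (rep L) > 0" using rep_props(2)[OF LP] by simp
  ultimately show ?thesis unfolding kap_def by simp
qed

lemma compact_bound:
  assumes "K \<subseteq> LC" and "compactin (Metric_space.mtopology ProjPlane dE) K"
  shows "\<exists>m::nat. m > 0 \<and> (\<forall>L\<in>K. 1 / real m < kap L)"
proof -
  define V where "V n = {P \<in> ProjPlane. 1 / real (Suc n) < kap P}" for n
  have op: "openin (Metric_space.mtopology ProjPlane dE) (V n)" for n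
    unfolding openin_mtop
  proof (intro conjI allI impI)
    show "V n \<subseteq> ProjPlane" unfolding V_def by auto
    fix P assume P: "P \<in> V n"
    define \<rho> where "\<rho> = (kap P - 1 / real (Suc n)) / 3"
    have rp: "\<rho> > 0" using P unfolding V_def \<rho>_def by simp
    have "{y. P \<in> ProjPlane \<and> y \<in> ProjPlane \<and> dE P y < \<rho>} \<subseteq> V n"
    proof
      fix Q assume "Q \<in> {y. P \<in> ProjPlane \<and> y \<in> ProjPlane \<and> dE P y < \<rho>}"
      then have Q: "P \<in> ProjPlane" "Q \<in> ProjPlane" "dE P Q < \<rho>" by auto
      have "\<bar>kap P - kap Q\<bar> \<le> 3 * dE P Q" by (rule kap_lip[OF Q(1,2)])
      moreover have "3 * dE P Q < kap P - 1 / real (Suc n)" using Q(3) unfolding \<rho>_def by simp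
      ultimately have "1 / real (Suc n) < kap Q" by (simp add: abs_le_iff)
      then show "Q \<in> V n" unfolding V_def using Q(2) by simp
    qed
    then show "\<exists>r>0. {y. P \<in> ProjPlane \<and> y \<in> ProjPlane \<and> dE P y < r} \<subseteq> V n" using rp by blast
  qed
  have cov: "K \<subseteq> \<Union> (range V)"
  proof
    fix L assume "L \<in> K"
    then have L: "L \<in> LC" using assms(1) by auto
    then have LP: "L \<in> ProjPlane" unfolding LC_def by auto
    obtain n where "n > 0" "inverse (real n) < kap L" using ex_inverse_of_nat_less kap_pos[OF L] by blast
    then have "1 / real (Suc (n - 1)) < kap L" by (simp add: inverse_eq_divide)
    then have "L \<in> V (n - 1)" unfolding V_def using LP by simp
    then show "L \<in> \<Union> (range V)" by blast
  qed
  have opall: "\<forall>U\<in>range V. openin (Metric_space.mtopology ProjPlane dE) U" using op by blast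
  obtain F where F: "finite F" "F \<subseteq> range V" "K \<subseteq> \<Union> F"
    using assms(2)[unfolded compactin_def, THEN conjunct2, rule_format, of "range V", OF conjI[OF opall cov]]
    by blast
  obtain N where N: "N \<subseteq> UNIV" "finite N" "F = V ` N" using finite_subset_image[OF F(1) F(2)] by blast
  define m where "m = Suc (Max (insert 0 N))"
  have "\<forall>L\<in>K. 1 / real m < kap L"
  proof
    fix L assume "L \<in> K"
    then obtain n where n: "n \<in> N" "L \<in> V n" using F(3) N(3) by auto
    have "n \<le> Max (insert 0 N)" using n(1) N(2) by simp
    then have "real (Suc n) \<le> real m" unfolding m_def by simp
    then have "1 / real m \<le> 1 / real (Suc n)" by (intro divide_left_mono) auto
    then show "1 / real m < kap L" using n(2) unfolding V_def by simp
  qed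
  then show ?thesis unfolding m_def by blast
qed

theorem lemma5p20:
  assumes "K \<subseteq> LC"
    and "compactin (Metric_space.mtopology ProjPlane dE) K"
  shows "\<exists>r0 > 0. \<exists>C::real. \<forall>x \<in> S3. \<forall>L \<in> K. \<forall>r \<delta>.
           0 < \<delta> \<and> \<delta> \<le> r \<and> r \<le> r0 \<longrightarrow>
           eta L (annulus x r \<delta>) \<le> ennreal (C * sqrt \<delta>)"
proof -
  obtain m :: nat where m: "m > 0" "\<forall>L\<in>K. 1 / real m < kap L" using compact_bound[OF assms] by blast
  define Em where "Em = real m"
  have Em1: "Em \<ge> 1" using m(1) unfolding Em_def by simp
  have bnd: "(norm (rep L))^2 / kp (rep L) \<le> Em" if "L \<in> K" for L
  proof -
    have L: "L \<in> LC" using that assms(1) by auto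
    have kp0: "kp (rep L) > 0" using kap_pos[OF L] by simp
    have h: "1 / Em < kp (rep L) / (norm (rep L))^2" using m(2) that unfolding Em_def kap_def by simp
    have "rep L \<noteq> 0" using rep_props(2) L unfolding LC_def by auto
    then have n2: "(norm (rep L))^2 > 0" by simp
    have "1 / Em * (norm (rep L))^2 < kp (rep L) / (norm (rep L))^2 * (norm (rep L))^2"
      by (rule mult_strict_right_mono[OF h n2])
    then have "(norm (rep L))^2 / Em < kp (rep L)" using n2 by simp
    then have "(norm (rep L))^2 < kp (rep L) * Em" using Em1 by (simp add: divide_less_eq)
    then show ?thesis using kp0 by (simp add: pos_divide_le_eq mult.commute)
  qed
  have main: "\<forall>x \<in> S3. \<forall>L \<in> K. \<forall>r \<delta>. 0 < \<delta> \<and> \<delta> \<le> r \<and> r \<le> 1 / (7 * Em) \<longrightarrow>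
           eta L (annulus x r \<delta>) \<le> ennreal ((800 * Em^2) * sqrt \<delta>)"
  proof (intro ballI allI impI)
    fix x L r \<delta> assume x: "x \<in> S3" and L: "L \<in> K" and rd: "0 < \<delta> \<and> \<delta> \<le> r \<and> r \<le> 1 / (7 * Em)"
    have kp0: "kp (rep L) > 0" using kap_pos L assms(1) by auto
    have "chain_of L = {P \<in> S3. herm (rep P) (rep L) = 0}" unfolding chain_of_def ..
    then show "eta L (annulus x r \<delta>) \<le> ennreal ((800 * Em^2) * sqrt \<delta>)"
      unfolding eta_def using main_L[OF kp0 bnd[OF L] x] rd by auto
  qed
  have "0 < 1 / (7 * Em)" using Em1 by simp
  then show ?thesis using main by blast
qed


end
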